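(* Let $N\ge2$, $n,m,p$ be positive integers, $A\in\mathbb{R}^{n\times n}$, $B\in\mathbb{R}^{n\times p}$, $C\in\mathbb{R}^{m\times n}$, $H\in\mathbb{R}^{n\times m}$, and $h>0$. Let $W=W_{circle}\in\mathbb{R}^{N\times N}$ have entries $w_{1,N}\neq0$, $w_{i,i-1}\neq0$ for $i=2,\dots,N$, and all other entries zero, and let $\Delta=\Delta_1=\mathrm{diag}(1,0,\dots,0)\in\mathbb{R}^{N\times N}$. Put $\mathcal{B}(h)=\int_0^h e^{A\tau}d\tau\,B$, $\mathcal{H}(h)=\int_0^h e^{A\tau}d\tau\,HC$, $\Phi_s=I_N\otimes e^{Ah}+W\otimes\mathcal{H}(h)$, $\Psi_s=\Delta\otimes\mathcal{B}(h)$. Let $v_1,\dots,v_N\in\mathbb{C}^{1\times N}$ be linearly independent row vectors with $v_kW=\lambda_kv_k$ ($\lambda_1,\dots,\lambda_N$ the eigenvalues of $W$), and $E_k=e^{Ah}+\lambda_k\mathcal{H}(h)$. Suppose: (2) the pair $(E_k,\mathcal{B}(h))$ is controllable for every $k=1,\dots,N$; (3) whenever $\theta\in\mathbb{C}$ is a common eigenvalue of $E_{k_1},\dots,E_{k_q}$ for distinct indices $k_1,\dots,k_q$ with $1<q\le N$, then $(v_{k_1}\otimes\xi_{k_1}+\dots+v_{k_q}\otimes\xi_{k_q})(\Delta\otimes\mathcal{B}(h))\neq0$ for all $\xi_j\in M(\theta\,|\,E_j)$, $j=k_1,\dots,k_q$, with $(\xi_{k_1},\dots,\xi_{k_q})\neq0$.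 Then the networked sampled-data system $X(k+1)=\Phi_sX(k)+\Psi_sU(k)$ is controllable.
   Context: The networked sampled-data system is the discrete-time system $X(k+1)=\Phi_sX(k)+\Psi_sU(k)$; it is called controllable if every initial state can be steered to the origin in finitely many steps. For $F\in\mathbb{C}^{q\times q}$, $G\in\mathbb{C}^{q\times s}$, the pair $(F,G)$ is called controllable if $\mathrm{rank}[sI_q-F,\ G]=q$ for every $s\in\mathbb{C}$. $M(\theta\,|\,E)=\{\xi:\ \xi E=\theta\xi\}$ is the left eigenspace of the square matrix $E$ for $\theta$. $\otimes$ is the Kronecker product. *)

theory Defs
  imports "HOL-Analysis.Analysis" "Jordan_Normal_Form.DL_Rank" "Jordan_Normal_Form.Char_Poly"
begin

definition mexp :: "real mat \<Rightarrow> real \<Rightarrow> real mat" where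
  "mexp A t = mat (dim_row A) (dim_col A)
      (\<lambda>(i,j). \<Sum>k. (t ^ k / fact k) * (A ^\<^sub>m k) $$ (i,j))"

definition mexp_int :: "real mat \<Rightarrow> real \<Rightarrow> real mat" where
  "mexp_int A h = mat (dim_row A) (dim_col A)
      (\<lambda>(i,j). integral {0..h} (\<lambda>\<tau>. mexp A \<tau> $$ (i,j)))"

definition kron :: "'a::times mat \<Rightarrow> 'a mat \<Rightarrow> 'a mat" where
  "kron P Q = mat (dim_row P * dim_row Q) (dim_col P * dim_col Q)
      (\<lambda>(i,j). P $$ (i div dim_row Q, j div dim_col Q) * Q $$ (i mod dim_row Q, j mod dim_col Q))"

definition cpx :: "real mat \<Rightarrow> complex mat" where
  "cpx M = map_mat complex_of_real M"

definition controllable_pair :: "complex mat \<Rightarrow> complex mat \<Rightarrow> bool" where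
  "controllable_pair F G \<longleftrightarrow>
     (\<forall>s::complex. vec_space.rank (dim_row F)
        (mat (dim_row F) (dim_row F + dim_col G)
           (\<lambda>(i,j). if j < dim_row F then (s \<cdot>\<^sub>m 1\<^sub>m (dim_row F) - F) $$ (i,j)
                    else G $$ (i, j - dim_row F))) = dim_row F)"

definition left_eigenspace :: "complex \<Rightarrow> complex mat \<Rightarrow> complex mat set" where
  "left_eigenspace \<theta> E = {\<xi> \<in> carrier_mat 1 (dim_row E). \<xi> * E = \<theta> \<cdot>\<^sub>m \<xi>}"

fun traj :: "real mat \<Rightarrow> real mat \<Rightarrow> real vec \<Rightarrow> (nat \<Rightarrow> real vec) \<Rightarrow> nat \<Rightarrow> real vec" where
  "traj Phi Psi X0 U 0 = X0"
| "traj Phi Psi X0 U (Suc k) = Phi *\<^sub>v traj Phi Psi X0 U k + Psi *\<^sub>v U k"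

definition dt_controllable :: "real mat \<Rightarrow> real mat \<Rightarrow> bool" where
  "dt_controllable Phi Psi \<longleftrightarrow>
     (\<forall>X0 \<in> carrier_vec (dim_row Phi). \<exists>U K.
        (\<forall>k. U k \<in> carrier_vec (dim_col Psi)) \<and> traj Phi Psi X0 U K = 0\<^sub>v (dim_row Phi))"

end

theory Submission
  imports Defs "Jordan_Normal_Form.Schur_Decomposition"
begin



lemma inv_exists:
  fixes A :: "'a::field mat"
  assumes A: "A \<in> carrier_mat n n" and d: "det A \<noteq> 0"
  shows "\<exists>B \<in> carrier_mat n n. A * B = 1\<^sub>m n \<and> B * A = 1\<^sub>m n"
proof -
  have "A \<in> Units (ring_mat TYPE('a) n ())" by (rule det_non_zero_imp_unit[OF A d])
  thus ?thesis unfolding Units_def by (auto simp: ring_mat_def)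
qed

lemma solve_exists:
  fixes A :: "'a::field mat"
  assumes A: "A \<in> carrier_mat n n" and d: "det A \<noteq> 0" and x: "x \<in> carrier_vec n"
  shows "\<exists>y \<in> carrier_vec n. A *\<^sub>v y = x"
proof -
  obtain B where B: "B \<in> carrier_mat n n" "A * B = 1\<^sub>m n" using inv_exists[OF A d] by auto
  have "A *\<^sub>v (B *\<^sub>v x) = (A * B) *\<^sub>v x" using assoc_mult_mat_vec[OF A B(1) x] by simp
  also have "\<dots> = x" using B x by simp
  finally show ?thesis using B x by (intro bexI[of _ "B *\<^sub>v x"]) auto
qed

lemma rank_full_left_kernel:
  fixes M :: "'a::field mat"
  assumes M: "M \<in> carrier_mat n nc" and r: "vec_space.rank n M = n"
    and x: "x \<in> carrier_vec n" and z: "\<forall>j<nc. (\<Sum>i<n. x$i * M$$(i,j)) = 0"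
  shows "x = 0\<^sub>v n"
proof -
  interpret vec_space "TYPE('a)" n .
  obtain S where S: "maximal S (\<lambda>T. T \<subseteq> set (cols M) \<and> lin_indpt T)"
    using maximal_exists[of "(\<lambda>T. T \<subseteq> set (cols M) \<and> lin_indpt T)" "card (set (cols M))" "{}"]
    by (meson List.finite_set card_mono empty_iff empty_subsetI finite_lin_indpt2 rev_finite_subset)
  have cS: "card S = n" using rank_card_indpt[OF M S] r by simp
  have Ssub: "S \<subseteq> set (cols M)" and li: "lin_indpt S" using S unfolding maximal_def by auto
  have fS: "finite S" using Ssub finite_subset by blast
  obtain xs where xs: "set xs = S" "distinct xs" using finite_distinct_list[OF fS] by blast
  have xsc: "set xs \<subseteq> carrier_vec n" using xs Ssub M cols_dim by blast
  have lxs: "length xs = n" using xs cS distinct_card by fastforce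
  define Q where "Q = mat_of_cols n xs"
  have Q: "Q \<in> carrier_mat n n" unfolding Q_def using lxs by auto
  have cQ: "cols Q = xs" unfolding Q_def using xsc by (simp add: cols_mat_of_cols)
  have rQ: "rank Q = n" using lin_indpt_full_rank[OF Q] cQ xs li by simp
  have dQ: "det Q \<noteq> 0" using det_rank_iff[OF Q] rQ by simp
  have dQt: "det (transpose_mat Q) \<noteq> 0" using dQ det_transpose[OF Q] by simp
  have tQ: "transpose_mat Q \<in> carrier_mat n n" using Q by simp
  have "transpose_mat Q *\<^sub>v x = 0\<^sub>v n"
  proof (rule eq_vecI)
    fix k assume "k < dim_vec (0\<^sub>v n :: 'a vec)"
    hence k: "k < n" by simp
    have "xs ! k \<in> set (cols M)" using xs Ssub k lxs by auto
    then obtain j where j: "j < nc" "xs ! k = col M j" using M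
      by (metis cols_length cols_nth in_set_conv_nth carrier_matD(2))
    have "(transpose_mat Q *\<^sub>v x) $ k = scalar_prod (row (transpose_mat Q) k) x" using k Q by simp
    also have "row (transpose_mat Q) k = col Q k" using k Q by simp
    also have "col Q k = xs ! k" using cQ k Q by (metis cols_nth carrier_matD(2))
    also have "xs ! k = col M j" by fact
    also have "scalar_prod (col M j) x = (\<Sum>i<n. x$i * M$$(i,j))"
      unfolding scalar_prod_def using x M j by (auto intro!: sum.cong simp: lessThan_atLeast0)
    finally show "(transpose_mat Q *\<^sub>v x) $ k = 0\<^sub>v n $ k" using z j k j(2) by simp
  qed (use Q in simp)
  thus ?thesis using det_0_iff_vec_prod_zero[OF tQ] dQt x by auto
qed

lemma mult_mat_vec_sum:
  assumes "M \<in> carrier_mat n m" "v \<in> carrier_vec m" "i < n"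
  shows "(M *\<^sub>v v) $ i = (\<Sum>k<m. M $$ (i,k) * v $ k)"
  using assms by (auto simp: scalar_prod_def lessThan_atLeast0 intro!: sum.cong)

lemma dep_exists:
  fixes w :: "nat \<Rightarrow> nat \<Rightarrow> 'a::field"
  shows "\<exists>c. (\<exists>k\<le>D. c k \<noteq> 0) \<and> (\<forall>i<D. (\<Sum>k\<le>D. c k * w k i) = 0)"
proof -
  define M where "M = mat D D (\<lambda>(i,k). w k i)"
  have M: "M \<in> carrier_mat D D" unfolding M_def by simp
  show ?thesis
  proof (cases "det M = 0")
    case True
    then obtain v where v: "v \<in> carrier_vec D" "v \<noteq> 0\<^sub>v D" "M *\<^sub>v v = 0\<^sub>v D"
      using det_0_iff_vec_prod_zero[OF M] by auto
    obtain k where k: "k < D" "v $ k \<noteq> 0" using v(1,2) by (metis eq_vecI carrier_vecD index_zero_vec(1,2))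
    define c where "c = (\<lambda>k. if k < D then v $ k else 0)"
    have "(\<Sum>k\<le>D. c k * w k i) = 0" if i: "i < D" for i
    proof -
      have "(\<Sum>k\<le>D. c k * w k i) = (\<Sum>k<D. c k * w k i)"
        unfolding lessThan_Suc_atMost[symmetric] by (simp add: c_def)
      also have "\<dots> = (M *\<^sub>v v) $ i" using mult_mat_vec_sum[OF M v(1) i]
        by (auto simp: c_def M_def i intro!: sum.cong)
      also have "\<dots> = 0" using v(3) i by simp
      finally show ?thesis .
    qed
    moreover have "c k \<noteq> 0" using k by (simp add: c_def)
    ultimately show ?thesis using k(1) less_imp_le by blast
  next
    case False
    obtain y where y: "y \<in> carrier_vec D" "M *\<^sub>v y = vec D (w D)"
      using solve_exists[OF M False, of "vec D (w D)"] by auto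
    define c where "c = (\<lambda>k. if k < D then y $ k else -1)"
    have "(\<Sum>k\<le>D. c k * w k i) = 0" if i: "i < D" for i
    proof -
      have "(\<Sum>k\<le>D. c k * w k i) = (\<Sum>k<D. c k * w k i) - w D i"
        unfolding lessThan_Suc_atMost[symmetric] by (simp add: c_def)
      also have "(\<Sum>k<D. c k * w k i) = (M *\<^sub>v y) $ i" using mult_mat_vec_sum[OF M y(1) i]
        by (auto simp: c_def M_def i intro!: sum.cong)
      also have "\<dots> = w D i" using y(2) i by simp
      finally show ?thesis by simp
    qed
    moreover have "c D \<noteq> 0" by (simp add: c_def)
    ultimately show ?thesis by (intro exI[of _ c]) auto
  qed
qed

lemma ctrl_pair_left:
  fixes F G \<xi> :: "complex mat"
  assumes F: "F \<in> carrier_mat n n" and G: "G \<in> carrier_mat n p"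
    and c: "controllable_pair F G" and xi: "\<xi> \<in> carrier_mat 1 n"
    and eig: "\<xi> * F = s \<cdot>\<^sub>m \<xi>" and z: "\<xi> * G = 0\<^sub>m 1 p"
  shows "\<xi> = 0\<^sub>m 1 n"
proof -
  define M where "M = mat n (n + p) (\<lambda>(i,j). if j < n then (s \<cdot>\<^sub>m 1\<^sub>m n - F) $$ (i,j)
                    else G $$ (i, j - n))"
  have M: "M \<in> carrier_mat n (n + p)" unfolding M_def by simp
  have r: "vec_space.rank n M = n" using c F G unfolding controllable_pair_def M_def by auto
  define x where "x = vec n (\<lambda>i. \<xi> $$ (0,i))"
  have x: "x \<in> carrier_vec n" unfolding x_def by simp
  have xiF: "(\<xi> * F) $$ (0,j) = (\<Sum>i<n. \<xi> $$ (0,i) * F $$ (i,j))" if "j < n" for j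
    using xi F that by (auto simp: scalar_prod_def lessThan_atLeast0 intro!: sum.cong)
  have xiG: "(\<xi> * G) $$ (0,j) = (\<Sum>i<n. \<xi> $$ (0,i) * G $$ (i,j))" if "j < p" for j
    using xi G that by (auto simp: scalar_prod_def lessThan_atLeast0 intro!: sum.cong)
  have "\<forall>j<n+p. (\<Sum>i<n. x$i * M$$(i,j)) = 0"
  proof (intro allI impI)
    fix j assume j: "j < n + p"
    show "(\<Sum>i<n. x$i * M$$(i,j)) = 0"
    proof (cases "j < n")
      case True
      have "(\<Sum>i<n. x$i * M$$(i,j)) = (\<Sum>i<n. (if i = j then s * \<xi> $$ (0,i) else 0) - \<xi> $$ (0,i) * F $$ (i,j))"
        using True F by (intro sum.cong) (auto simp: M_def x_def right_diff_distrib)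
      also have "\<dots> = s * \<xi> $$ (0,j) - (\<xi> * F) $$ (0,j)"
        using True by (simp add: sum_subtractf xiF)
      also have "(\<xi> * F) $$ (0,j) = s * \<xi> $$ (0,j)" using eig True xi by simp
      finally show ?thesis by simp
    next
      case False
      have "(\<Sum>i<n. x$i * M$$(i,j)) = (\<Sum>i<n. \<xi> $$ (0,i) * G $$ (i,j-n))"
        using False j by (auto simp: M_def x_def intro!: sum.cong)
      also have "\<dots> = (\<xi> * G) $$ (0,j-n)" using xiG False j by simp
      also have "\<dots> = 0" using z False j by simp
      finally show ?thesis .
    qed
  qed
  hence "x = 0\<^sub>v n" using rank_full_left_kernel[OF M r x] by blast
  show ?thesis
  proof (rule eq_matI)
    fix i j assume "i < dim_row (0\<^sub>m 1 n :: complex mat)" "j < dim_col (0\<^sub>m 1 n :: complex mat)"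
    hence ij: "i = 0" "j < n" by auto
    have "\<xi> $$ (0,j) = x $ j" using ij by (simp add: x_def)
    thus "\<xi> $$ (i,j) = 0\<^sub>m 1 n $$ (i,j)" using \<open>x = 0\<^sub>v n\<close> ij by simp
  qed (use xi in auto)
qed


lemma mat_diff_smult_in:
  fixes x y :: "'a::comm_ring_1 mat"
  assumes "x \<in> carrier_mat 1 D" "y \<in> carrier_mat 1 D"
  shows "x - y = x + (-1) \<cdot>\<^sub>m y"
  using assms by (intro eq_matI) auto

lemma inv_subspace_eigvec:
  fixes F :: "complex mat" and L :: "complex mat set"
  assumes F: "F \<in> carrier_mat D D"
    and Lc: "L \<subseteq> carrier_mat 1 D"
    and add: "\<forall>x\<in>L. \<forall>y\<in>L. x + y \<in> L"
    and smult: "\<forall>x\<in>L. \<forall>a. a \<cdot>\<^sub>m x \<in> L"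
    and inv: "\<forall>x\<in>L. x * F \<in> L"
    and ne: "\<eta>0 \<in> L" "\<eta>0 \<noteq> 0\<^sub>m 1 D"
  shows "\<exists>\<eta>\<in>L. \<eta> \<noteq> 0\<^sub>m 1 D \<and> (\<exists>\<theta>. \<eta> * F = \<theta> \<cdot>\<^sub>m \<eta>)"
proof -
  obtain es where es: "char_poly F = (\<Prod>a\<leftarrow>es. [:- a, 1:])"
    using char_poly_factorized[OF F] by blast
  obtain T Pm Qm where sd: "schur_decomposition F es = (T, Pm, Qm)" by (cases "schur_decomposition F es") auto
  from schur_decomposition[OF F es sd] have sim: "similar_mat_wit F T Pm Qm" and ut: "upper_triangular T" by auto
  from sim F have T: "T \<in> carrier_mat D D" and Pm: "Pm \<in> carrier_mat D D" and Qm: "Qm \<in> carrier_mat D D"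
    and PQ: "Pm * Qm = 1\<^sub>m D" and QP: "Qm * Pm = 1\<^sub>m D" and FPTQ: "F = Pm * T * Qm"
    unfolding similar_mat_wit_def Let_def by auto
  define Z where "Z = {\<zeta>. \<zeta> \<in> carrier_mat 1 D \<and> \<zeta> * Qm \<in> L \<and> \<zeta> \<noteq> 0\<^sub>m 1 D}"
  define fnz where "fnz = (\<lambda>\<zeta>::complex mat. LEAST i. \<zeta> $$ (0,i) \<noteq> 0)"
  have nz_entry: "\<exists>i<D. \<zeta> $$ (0,i) \<noteq> 0" if "\<zeta> \<in> carrier_mat 1 D" "\<zeta> \<noteq> 0\<^sub>m 1 D" for \<zeta> :: "complex mat"
  proof (rule ccontr)
    assume "\<not> ?thesis"
    hence "\<zeta> = 0\<^sub>m 1 D" using that(1) by (intro eq_matI) auto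
    thus False using that(2) by simp
  qed
  have fnz: "fnz \<zeta> < D \<and> \<zeta> $$ (0, fnz \<zeta>) \<noteq> 0 \<and> (\<forall>k<fnz \<zeta>. \<zeta> $$ (0,k) = 0)"
    if zc0: "\<zeta> \<in> carrier_mat 1 D" and zn0: "\<zeta> \<noteq> 0\<^sub>m 1 D" for \<zeta>
  proof -
    obtain i where i: "i < D" "\<zeta> $$ (0,i) \<noteq> 0" using nz_entry[OF zc0 zn0] by blast
    have "fnz \<zeta> \<le> i" unfolding fnz_def using i by (intro Least_le) auto
    moreover have "\<zeta> $$ (0, fnz \<zeta>) \<noteq> 0" unfolding fnz_def using i by (intro LeastI) auto
    moreover have "\<forall>k<fnz \<zeta>. \<zeta> $$ (0,k) = 0" unfolding fnz_def using not_less_Least by blast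
    ultimately show ?thesis using i by auto
  qed
  define \<zeta>0 where "\<zeta>0 = \<eta>0 * Pm"
  have eta0c: "\<eta>0 \<in> carrier_mat 1 D" using ne Lc by auto
  have z0c: "\<zeta>0 \<in> carrier_mat 1 D" unfolding \<zeta>0_def using eta0c Pm by auto
  have z0Q: "\<zeta>0 * Qm = \<eta>0" unfolding \<zeta>0_def using eta0c Pm Qm PQ
    by (metis assoc_mult_mat right_mult_one_mat)
  have "\<zeta>0 \<noteq> 0\<^sub>m 1 D"
  proof
    assume "\<zeta>0 = 0\<^sub>m 1 D"
    hence "\<eta>0 = 0\<^sub>m 1 D * Qm" using z0Q by simp
    thus False using ne Qm by simp
  qed
  hence "\<zeta>0 \<in> Z" unfolding Z_def using z0c z0Q ne by auto
  then obtain \<zeta> where zZ: "\<zeta> \<in> Z" and zmax: "\<forall>y. y \<in> Z \<longrightarrow> fnz y \<le> fnz \<zeta>"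
    using ex_has_greatest_nat[of "\<lambda>z. z \<in> Z" \<zeta>0 fnz D] fnz unfolding Z_def by blast
  have zc: "\<zeta> \<in> carrier_mat 1 D" and zQL: "\<zeta> * Qm \<in> L" and znz: "\<zeta> \<noteq> 0\<^sub>m 1 D"
    using zZ unfolding Z_def by auto
  define i where "i = fnz \<zeta>"
  have i: "i < D" "\<zeta> $$ (0,i) \<noteq> 0" "\<forall>k<i. \<zeta> $$ (0,k) = 0" using fnz[OF zc znz] unfolding i_def by auto
  define \<theta> where "\<theta> = T $$ (i,i)"
  define \<zeta>' where "\<zeta>' = \<zeta> * T - \<theta> \<cdot>\<^sub>m \<zeta>"
  have z'c: "\<zeta>' \<in> carrier_mat 1 D" unfolding \<zeta>'_def using zc T by auto
  have ZT: "\<zeta> * T * Qm = (\<zeta> * Qm) * F"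
  proof -
    have zQ: "\<zeta> * Qm \<in> carrier_mat 1 D" using zc Qm by auto
    have TQ: "T * Qm \<in> carrier_mat D D" using T Qm by auto
    have "(\<zeta> * Qm) * F = (\<zeta> * Qm) * (Pm * (T * Qm))" unfolding FPTQ using assoc_mult_mat[OF Pm T Qm] by simp
    also have "\<dots> = ((\<zeta> * Qm) * Pm) * (T * Qm)" using assoc_mult_mat[OF zQ Pm TQ] by simp
    also have "(\<zeta> * Qm) * Pm = \<zeta>" using assoc_mult_mat[OF zc Qm Pm] QP zc by simp
    also have "\<zeta> * (T * Qm) = \<zeta> * T * Qm" using assoc_mult_mat[OF zc T Qm] by simp
    finally show ?thesis by simp
  qed
  have z'Q: "\<zeta>' * Qm = (\<zeta> * Qm) * F + (-1) \<cdot>\<^sub>m (\<theta> \<cdot>\<^sub>m (\<zeta> * Qm))"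
  proof -
    have "\<zeta>' * Qm = (\<zeta> * T + (-1) \<cdot>\<^sub>m (\<theta> \<cdot>\<^sub>m \<zeta>)) * Qm"
      unfolding \<zeta>'_def using zc T by (subst mat_diff_smult_in[of _ D]) auto
    also have "\<dots> = \<zeta> * T * Qm + (-1) \<cdot>\<^sub>m (\<theta> \<cdot>\<^sub>m (\<zeta> * Qm))"
      using zc T Qm by (simp add: add_mult_distrib_mat[of _ 1 D] mult_smult_assoc_mat[of _ 1 D])
    finally show ?thesis using ZT by simp
  qed
  have z'L: "\<zeta>' * Qm \<in> L" unfolding z'Q using add smult inv zQL by blast
  have z'0: "\<zeta>' $$ (0,j) = 0" if j: "j \<le> i" for j
  proof -
    have jD: "j < D" using j i by simp
    have "(\<zeta> * T) $$ (0,j) = (\<Sum>k<D. \<zeta> $$ (0,k) * T $$ (k,j))"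
      using zc T jD by (auto simp: scalar_prod_def lessThan_atLeast0 intro!: sum.cong)
    also have "\<dots> = (\<Sum>k<D. if k = i \<and> j = i then \<zeta> $$ (0,i) * T $$ (i,i) else 0)"
    proof (intro sum.cong refl)
      fix k assume k: "k \<in> {..<D}"
      show "\<zeta> $$ (0,k) * T $$ (k,j) = (if k = i \<and> j = i then \<zeta> $$ (0,i) * T $$ (i,i) else 0)"
      proof (cases "k < i")
        case True thus ?thesis using i(3) by auto
      next
        case False
        show ?thesis
        proof (cases "k = i \<and> j = i")
          case True thus ?thesis by simp
        next
          case False2: False
          with False j have "j < k" by auto
          hence "T $$ (k,j) = 0" using ut T k unfolding upper_triangular_def by auto
          thus ?thesis using False2 by auto
        qed
      qed
    qed
    also have "\<dots> = (if j = i then \<zeta> $$ (0,i) * T $$ (i,i) else 0)"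
      using i(1) by (auto simp: sum.delta)
    finally have "(\<zeta> * T) $$ (0,j) = (if j = i then \<zeta> $$ (0,i) * T $$ (i,i) else 0)" .
    moreover have "\<zeta> $$ (0,j) = 0 \<or> j = i" using i(3) j by auto
    ultimately show ?thesis unfolding \<zeta>'_def \<theta>_def using zc T jD by auto
  qed
  have z'zero: "\<zeta>' = 0\<^sub>m 1 D"
  proof (rule ccontr)
    assume nz: "\<zeta>' \<noteq> 0\<^sub>m 1 D"
    hence "\<zeta>' \<in> Z" unfolding Z_def using z'c z'L by auto
    hence le: "fnz \<zeta>' \<le> i" using zmax unfolding i_def by auto
    from fnz[OF z'c nz] have "\<zeta>' $$ (0, fnz \<zeta>') \<noteq> 0" by auto
    thus False using z'0[OF le] by simp
  qed
  have zT: "\<zeta> * T = \<theta> \<cdot>\<^sub>m \<zeta>"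
  proof (rule eq_matI)
    fix a b assume ab: "a < dim_row (\<theta> \<cdot>\<^sub>m \<zeta>)" "b < dim_col (\<theta> \<cdot>\<^sub>m \<zeta>)"
    have "\<zeta>' $$ (a,b) = 0" using z'zero ab zc by simp
    thus "(\<zeta> * T) $$ (a,b) = (\<theta> \<cdot>\<^sub>m \<zeta>) $$ (a,b)" unfolding \<zeta>'_def using ab zc T by simp
  qed (use zc T in auto)
  define \<eta> where "\<eta> = \<zeta> * Qm"
  have etac: "\<eta> \<in> carrier_mat 1 D" unfolding \<eta>_def using zc Qm by auto
  have "\<eta> * Pm = \<zeta>" unfolding \<eta>_def using zc Qm Pm QP
    by (metis assoc_mult_mat right_mult_one_mat)
  have enz: "\<eta> \<noteq> 0\<^sub>m 1 D"
  proof
    assume "\<eta> = 0\<^sub>m 1 D"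
    hence "\<zeta> = 0\<^sub>m 1 D * Pm" using \<open>\<eta> * Pm = \<zeta>\<close> by simp
    thus False using znz Pm by simp
  qed
  have "\<eta> * F = \<zeta> * T * Qm" unfolding \<eta>_def using ZT by simp
  also have "\<dots> = \<theta> \<cdot>\<^sub>m \<eta>" unfolding zT \<eta>_def using zc Qm by (simp add: mult_smult_assoc_mat[of _ 1 D])
  finally show ?thesis using zQL enz unfolding \<eta>_def by blast
qed

definition Lk :: "complex mat \<Rightarrow> complex mat \<Rightarrow> nat \<Rightarrow> complex mat set" where
  "Lk F G K = {\<eta>. \<eta> \<in> carrier_mat 1 (dim_row F) \<and> (\<forall>j<K. \<eta> * (F ^\<^sub>m j * G) = 0\<^sub>m 1 (dim_col G))}"

lemma pow_mat_comm:
  assumes A: "A \<in> carrier_mat n n"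
  shows "A * A ^\<^sub>m k = A ^\<^sub>m k * A"
proof (induction k)
  case 0 thus ?case using A by simp
next
  case (Suc k)
  have Ak: "A ^\<^sub>m k \<in> carrier_mat n n" using A by simp
  have "A * A ^\<^sub>m Suc k = (A * A ^\<^sub>m k) * A" using assoc_mult_mat[OF A Ak A] by simp
  also have "\<dots> = A ^\<^sub>m Suc k * A" using Suc by simp
  finally show ?case .
qed

lemma Lk_shift:
  assumes F: "F \<in> carrier_mat D D" and G: "G \<in> carrier_mat D P"
    and e: "\<eta> \<in> Lk F G (Suc K)"
  shows "\<eta> * F \<in> Lk F G K"
proof -
  have ec: "\<eta> \<in> carrier_mat 1 D" using e F unfolding Lk_def by auto
  have "(\<eta> * F) * (F ^\<^sub>m j * G) = 0\<^sub>m 1 P" if j: "j < K" for j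
  proof -
    have Fj: "F ^\<^sub>m j \<in> carrier_mat D D" using F by simp
    have FjG: "F ^\<^sub>m j * G \<in> carrier_mat D P" using mult_carrier_mat[OF Fj G] .
    have "(\<eta> * F) * (F ^\<^sub>m j * G) = \<eta> * (F * (F ^\<^sub>m j * G))" using assoc_mult_mat[OF ec F FjG] by simp
    also have "F * (F ^\<^sub>m j * G) = (F * F ^\<^sub>m j) * G" using assoc_mult_mat[OF F Fj G] by simp
    also have "F * F ^\<^sub>m j = F ^\<^sub>m Suc j" using pow_mat_comm[OF F] by simp
    also have "\<eta> * (F ^\<^sub>m Suc j * G) = 0\<^sub>m 1 P" using e j G unfolding Lk_def by auto
    finally show ?thesis .
  qed
  thus ?thesis using ec F G unfolding Lk_def by auto
qed

lemma Lk_stab: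
  assumes F: "F \<in> carrier_mat D D" and G: "G \<in> carrier_mat D P"
  shows "\<exists>K. Lk F G K \<subseteq> Lk F G (Suc K)"
proof (rule ccontr)
  assume "\<not> ?thesis"
  hence "\<forall>K. \<exists>\<eta>. \<eta> \<in> Lk F G K \<and> \<eta> \<notin> Lk F G (Suc K)" by blast
  then obtain e where e: "\<And>K. e K \<in> Lk F G K \<and> e K \<notin> Lk F G (Suc K)" by metis
  have ec: "e K \<in> carrier_mat 1 D" for K using e[of K] F unfolding Lk_def by auto
  have ez: "e K * (F ^\<^sub>m j * G) = 0\<^sub>m 1 P" if "j < K" for K j using e[of K] that G unfolding Lk_def by auto
  have enz: "e K * (F ^\<^sub>m K * G) \<noteq> 0\<^sub>m 1 P" for K
  proof
    assume a: "e K * (F ^\<^sub>m K * G) = 0\<^sub>m 1 P"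
    have "e K \<in> Lk F G (Suc K)" unfolding Lk_def using ec[of K] F G ez[of _ K] a
      by (auto simp: less_Suc_eq)
    thus False using e[of K] by blast
  qed
  obtain c where c: "\<exists>k\<le>D. c k \<noteq> 0" "\<forall>i<D. (\<Sum>k\<le>D. c k * e k $$ (0,i)) = 0"
    using dep_exists[of D "\<lambda>k i. e k $$ (0,i)"] by blast
  define k0 where "k0 = (LEAST k. c k \<noteq> 0)"
  have k0: "c k0 \<noteq> 0" "k0 \<le> D" "\<forall>k<k0. c k = 0"
  proof -
    obtain k where k: "k \<le> D" "c k \<noteq> 0" using c(1) by blast
    show "c k0 \<noteq> 0" unfolding k0_def using k by (intro LeastI) auto
    show "k0 \<le> D" unfolding k0_def using k by (meson Least_le order_trans)
    show "\<forall>k<k0. c k = 0" unfolding k0_def using not_less_Least by blast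
  qed
  define M where "M = F ^\<^sub>m k0 * G"
  have M: "M \<in> carrier_mat D P" unfolding M_def using mult_carrier_mat[OF pow_carrier_mat[OF F] G] .
  have entry: "(e k * M) $$ (0,l) = (\<Sum>i<D. e k $$ (0,i) * M $$ (i,l))" if "l < P" for k l
    using ec[of k] M that by (auto simp: scalar_prod_def lessThan_atLeast0 intro!: sum.cong)
  have "e k0 * M = 0\<^sub>m 1 P"
  proof (rule eq_matI)
    fix a l assume al: "a < dim_row (0\<^sub>m 1 P :: complex mat)" "l < dim_col (0\<^sub>m 1 P :: complex mat)"
    hence a0: "a = 0" and l: "l < P" by auto
    have "(\<Sum>k\<le>D. c k * (e k * M) $$ (0,l)) = (\<Sum>k\<le>D. if k = k0 then c k0 * (e k0 * M) $$ (0,l) else 0)"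
    proof (intro sum.cong refl)
      fix k assume "k \<in> {..D}"
      show "c k * (e k * M) $$ (0,l) = (if k = k0 then c k0 * (e k0 * M) $$ (0,l) else 0)"
      proof (cases "k < k0")
        case True thus ?thesis using k0(3) by auto
      next
        case False
        show ?thesis
        proof (cases "k = k0")
          case False2: False
          with False have "k0 < k" by auto
          hence "e k * M = 0\<^sub>m 1 P" unfolding M_def by (rule ez)
          thus ?thesis using False2 l by simp
        qed simp
      qed
    qed
    also have "\<dots> = c k0 * (e k0 * M) $$ (0,l)" using k0(2) by (simp add: sum.delta)
    finally have eq1: "(\<Sum>k\<le>D. c k * (e k * M) $$ (0,l)) = c k0 * (e k0 * M) $$ (0,l)" .
    have "(\<Sum>k\<le>D. c k * (e k * M) $$ (0,l)) = (\<Sum>k\<le>D. \<Sum>i<D. c k * e k $$ (0,i) * M $$ (i,l))"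
      using l by (simp add: entry sum_distrib_left mult.assoc)
    also have "\<dots> = (\<Sum>i<D. (\<Sum>k\<le>D. c k * e k $$ (0,i)) * M $$ (i,l))"
      by (subst sum.swap) (simp add: sum_distrib_right)
    also have "\<dots> = 0" using c(2) by simp
    finally have "c k0 * (e k0 * M) $$ (0,l) = 0" using eq1 by simp
    thus "(e k0 * M) $$ (a,l) = 0\<^sub>m 1 P $$ (a,l)" using k0(1) a0 l by simp
  qed (use ec M in auto)
  thus False using enz[of k0] unfolding M_def by simp
qed

lemma pbh_complex:
  assumes F: "F \<in> carrier_mat D D" and G: "G \<in> carrier_mat D P"
    and pbh: "\<forall>\<theta> \<eta>. \<eta> \<in> carrier_mat 1 D \<longrightarrow> \<eta> * F = \<theta> \<cdot>\<^sub>m \<eta> \<longrightarrow> \<eta> * G = 0\<^sub>m 1 P \<longrightarrow> \<eta> = 0\<^sub>m 1 D"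
  shows "\<exists>K. \<forall>\<eta>\<in>Lk F G K. \<eta> = 0\<^sub>m 1 D"
proof -
  obtain K where K: "Lk F G K \<subseteq> Lk F G (Suc K)" using Lk_stab[OF F G] by blast
  have Lc: "Lk F G K \<subseteq> carrier_mat 1 D" using F unfolding Lk_def by auto
  have add: "\<forall>x\<in>Lk F G K. \<forall>y\<in>Lk F G K. x + y \<in> Lk F G K"
  proof (intro ballI)
    fix x y assume x: "x \<in> Lk F G K" and y: "y \<in> Lk F G K"
    have xc: "x \<in> carrier_mat 1 D" and yc: "y \<in> carrier_mat 1 D" using x y Lc by auto
    have "(x + y) * (F ^\<^sub>m j * G) = 0\<^sub>m 1 P" if "j < K" for j
    proof -
      have FjG: "F ^\<^sub>m j * G \<in> carrier_mat D P" using mult_carrier_mat[OF pow_carrier_mat[OF F] G] .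
      have "(x + y) * (F ^\<^sub>m j * G) = x * (F ^\<^sub>m j * G) + y * (F ^\<^sub>m j * G)"
        using add_mult_distrib_mat[OF xc yc FjG] .
      thus ?thesis using x y that F G unfolding Lk_def by auto
    qed
    thus "x + y \<in> Lk F G K" using xc yc F G unfolding Lk_def by auto
  qed
  have smult: "\<forall>x\<in>Lk F G K. \<forall>a. a \<cdot>\<^sub>m x \<in> Lk F G K"
  proof (intro ballI allI)
    fix x a assume x: "x \<in> Lk F G K"
    have xc: "x \<in> carrier_mat 1 D" using x Lc by auto
    have "(a \<cdot>\<^sub>m x) * (F ^\<^sub>m j * G) = 0\<^sub>m 1 P" if "j < K" for j
    proof -
      have FjG: "F ^\<^sub>m j * G \<in> carrier_mat D P" using mult_carrier_mat[OF pow_carrier_mat[OF F] G] .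
      have "(a \<cdot>\<^sub>m x) * (F ^\<^sub>m j * G) = a \<cdot>\<^sub>m (x * (F ^\<^sub>m j * G))"
        using mult_smult_assoc_mat[OF xc FjG] .
      thus ?thesis using x that F G unfolding Lk_def by auto
    qed
    thus "a \<cdot>\<^sub>m x \<in> Lk F G K" using xc F G unfolding Lk_def by auto
  qed
  have inv: "\<forall>x\<in>Lk F G K. x * F \<in> Lk F G K" using K Lk_shift[OF F G] by blast
  show ?thesis
  proof (rule ccontr)
    assume "\<not> ?thesis"
    then obtain \<eta>0 where ne: "\<eta>0 \<in> Lk F G K" "\<eta>0 \<noteq> 0\<^sub>m 1 D" by blast
    obtain \<eta> \<theta> where eta: "\<eta> \<in> Lk F G K" "\<eta> \<noteq> 0\<^sub>m 1 D" "\<eta> * F = \<theta> \<cdot>\<^sub>m \<eta>"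
      using inv_subspace_eigvec[OF F Lc add smult inv ne] by blast
    have ec: "\<eta> \<in> carrier_mat 1 D" using eta Lc by auto
    have "\<eta> \<in> Lk F G (Suc K)" using eta K by auto
    hence "\<eta> * (F ^\<^sub>m 0 * G) = 0\<^sub>m 1 P" using G unfolding Lk_def by auto
    hence "\<eta> * G = 0\<^sub>m 1 P" using G F by simp
    thus False using pbh ec eta by blast
  qed
qed



lemma mult_mat_entry:
  assumes "A \<in> carrier_mat m n" "B \<in> carrier_mat n p" "a < m" "l < p"
  shows "(A * B) $$ (a,l) = (\<Sum>b<n. A $$ (a,b) * B $$ (b,l))"
  using assms by (auto simp: scalar_prod_def lessThan_atLeast0 intro!: sum.cong)

lemma traj_formula:
  fixes Phi Psi :: "real mat"
  assumes Phi: "Phi \<in> carrier_mat D D" and Psi: "Psi \<in> carrier_mat D P"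
    and X0: "X0 \<in> carrier_vec D" and U: "\<forall>j. U j \<in> carrier_vec P"
  shows "traj Phi Psi X0 U k \<in> carrier_vec D \<and> (\<forall>a<D. traj Phi Psi X0 U k $ a =
     (Phi ^\<^sub>m k *\<^sub>v X0) $ a + (\<Sum>i<k. \<Sum>l<P. (Phi ^\<^sub>m (k - Suc i) * Psi) $$ (a,l) * U i $ l))"
proof (induction k)
  case 0
  thus ?case using X0 Phi by simp
next
  case (Suc k)
  define T where "T = traj Phi Psi X0 U k"
  have Tc: "T \<in> carrier_vec D" and Te: "\<forall>a<D. T $ a =
     (Phi ^\<^sub>m k *\<^sub>v X0) $ a + (\<Sum>i<k. \<Sum>l<P. (Phi ^\<^sub>m (k - Suc i) * Psi) $$ (a,l) * U i $ l)"
    using Suc unfolding T_def by auto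
  have tr: "traj Phi Psi X0 U (Suc k) = Phi *\<^sub>v T + Psi *\<^sub>v U k" unfolding T_def by simp
  have c: "traj Phi Psi X0 U (Suc k) \<in> carrier_vec D" unfolding tr using Phi Psi Tc U by auto
  have "traj Phi Psi X0 U (Suc k) $ a =
     (Phi ^\<^sub>m Suc k *\<^sub>v X0) $ a + (\<Sum>i<Suc k. \<Sum>l<P. (Phi ^\<^sub>m (Suc k - Suc i) * Psi) $$ (a,l) * U i $ l)"
    if a: "a < D" for a
  proof -
    have Pk: "Phi ^\<^sub>m k \<in> carrier_mat D D" using Phi by simp
    have PkX: "Phi ^\<^sub>m k *\<^sub>v X0 \<in> carrier_vec D" using Pk X0 by simp
    have e1: "(Phi *\<^sub>v T) $ a = (\<Sum>b<D. Phi $$ (a,b) * T $ b)" using mult_mat_vec_sum[OF Phi Tc a] .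
    have e2: "(\<Sum>b<D. Phi $$ (a,b) * (Phi ^\<^sub>m k *\<^sub>v X0) $ b) = (Phi ^\<^sub>m Suc k *\<^sub>v X0) $ a"
    proof -
      have "(\<Sum>b<D. Phi $$ (a,b) * (Phi ^\<^sub>m k *\<^sub>v X0) $ b) = (Phi *\<^sub>v (Phi ^\<^sub>m k *\<^sub>v X0)) $ a"
        using mult_mat_vec_sum[OF Phi PkX a] by simp
      also have "Phi *\<^sub>v (Phi ^\<^sub>m k *\<^sub>v X0) = (Phi * Phi ^\<^sub>m k) *\<^sub>v X0"
        using assoc_mult_mat_vec[OF Phi Pk X0] by simp
      also have "Phi * Phi ^\<^sub>m k = Phi ^\<^sub>m Suc k" using pow_mat_comm[OF Phi] by simp
      finally show ?thesis .
    qed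
    have e3: "(\<Sum>b<D. Phi $$ (a,b) * (\<Sum>i<k. \<Sum>l<P. (Phi ^\<^sub>m (k - Suc i) * Psi) $$ (b,l) * U i $ l))
       = (\<Sum>i<k. \<Sum>l<P. (Phi ^\<^sub>m (Suc k - Suc i) * Psi) $$ (a,l) * U i $ l)"
    proof -
      have "(\<Sum>b<D. Phi $$ (a,b) * (\<Sum>i<k. \<Sum>l<P. (Phi ^\<^sub>m (k - Suc i) * Psi) $$ (b,l) * U i $ l))
        = (\<Sum>i<k. \<Sum>l<P. (\<Sum>b<D. Phi $$ (a,b) * (Phi ^\<^sub>m (k - Suc i) * Psi) $$ (b,l)) * U i $ l)"
        by (simp add: sum_distrib_left sum_distrib_right mult.assoc sum.swap[of _ "{..<D}"])
      also have "\<dots> = (\<Sum>i<k. \<Sum>l<P. (Phi ^\<^sub>m (Suc k - Suc i) * Psi) $$ (a,l) * U i $ l)"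
      proof (intro sum.cong refl)
        fix i l assume i: "i \<in> {..<k}" and l: "l \<in> {..<P}"
        have Pi: "Phi ^\<^sub>m (k - Suc i) \<in> carrier_mat D D" using Phi by simp
        have PiP: "Phi ^\<^sub>m (k - Suc i) * Psi \<in> carrier_mat D P" using mult_carrier_mat[OF Pi Psi] .
        have "(\<Sum>b<D. Phi $$ (a,b) * (Phi ^\<^sub>m (k - Suc i) * Psi) $$ (b,l)) = (Phi * (Phi ^\<^sub>m (k - Suc i) * Psi)) $$ (a,l)"
          using mult_mat_entry[OF Phi PiP a] l by simp
        also have "Phi * (Phi ^\<^sub>m (k - Suc i) * Psi) = (Phi * Phi ^\<^sub>m (k - Suc i)) * Psi"
          using assoc_mult_mat[OF Phi Pi Psi] by simp
        also have "Phi * Phi ^\<^sub>m (k - Suc i) = Phi ^\<^sub>m (Suc k - Suc i)"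
        proof -
          have "Suc k - Suc i = Suc (k - Suc i)" using i by auto
          thus ?thesis using pow_mat_comm[OF Phi, of "k - Suc i"] by simp
        qed
        finally show "(\<Sum>b<D. Phi $$ (a,b) * (Phi ^\<^sub>m (k - Suc i) * Psi) $$ (b,l)) * U i $ l
          = (Phi ^\<^sub>m (Suc k - Suc i) * Psi) $$ (a,l) * U i $ l" by simp
      qed
      finally show ?thesis .
    qed
    have e4: "(Psi *\<^sub>v U k) $ a = (\<Sum>l<P. (Phi ^\<^sub>m (Suc k - Suc k) * Psi) $$ (a,l) * U k $ l)"
      using mult_mat_vec_sum[OF Psi _ a, of "U k"] U Psi Phi by simp
    have "traj Phi Psi X0 U (Suc k) $ a = (Phi *\<^sub>v T) $ a + (Psi *\<^sub>v U k) $ a"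
      unfolding tr using a Phi Psi by simp
    also have "(Phi *\<^sub>v T) $ a = (\<Sum>b<D. Phi $$ (a,b) * (Phi ^\<^sub>m k *\<^sub>v X0) $ b)
       + (\<Sum>b<D. Phi $$ (a,b) * (\<Sum>i<k. \<Sum>l<P. (Phi ^\<^sub>m (k - Suc i) * Psi) $$ (b,l) * U i $ l))"
      unfolding e1 by (simp add: Te distrib_left sum.distrib)
    finally show ?thesis unfolding e2 e3 e4 by simp
  qed
  note R = this
  show ?case by (intro conjI allI impI c) (erule R)
qed


lemma cpx_carrier[simp]: "M \<in> carrier_mat a b \<Longrightarrow> cpx M \<in> carrier_mat a b"
  unfolding cpx_def by simp

lemma cpx_mult: "A \<in> carrier_mat a b \<Longrightarrow> B \<in> carrier_mat b c \<Longrightarrow> cpx (A * B) = cpx A * cpx B"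
  unfolding cpx_def by (rule of_real_hom.mat_hom_mult)

lemma cpx_pow: "A \<in> carrier_mat a a \<Longrightarrow> cpx (A ^\<^sub>m k) = cpx A ^\<^sub>m k"
  unfolding cpx_def by (rule of_real_hom.mat_hom_pow)

lemma pbh_dt:
  fixes Phi Psi :: "real mat"
  assumes Phi: "Phi \<in> carrier_mat D D" and Psi: "Psi \<in> carrier_mat D P"
    and pbh: "\<forall>\<theta> \<eta>. \<eta> \<in> carrier_mat 1 D \<longrightarrow> \<eta> * cpx Phi = \<theta> \<cdot>\<^sub>m \<eta> \<longrightarrow> \<eta> * cpx Psi = 0\<^sub>m 1 P \<longrightarrow> \<eta> = 0\<^sub>m 1 D"
  shows "dt_controllable Phi Psi"
proof -
  have Fc: "cpx Phi \<in> carrier_mat D D" and Gc: "cpx Psi \<in> carrier_mat D P" using Phi Psi by auto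
  obtain K where K: "\<forall>\<eta>\<in>Lk (cpx Phi) (cpx Psi) K. \<eta> = 0\<^sub>m 1 D"
    using pbh_complex[OF Fc Gc pbh] by blast
  define Mj where "Mj = (\<lambda>j. Phi ^\<^sub>m j * Psi)"
  have Mj: "Mj j \<in> carrier_mat D P" for j unfolding Mj_def using mult_carrier_mat[OF pow_carrier_mat[OF Phi] Psi] .
  define G where "G = mat D D (\<lambda>(a,b). \<Sum>j<K. \<Sum>l<P. Mj j $$ (a,l) * Mj j $$ (b,l))"
  have G: "G \<in> carrier_mat D D" unfolding G_def by simp
  have Gy: "(G *\<^sub>v y) $ a = (\<Sum>j<K. \<Sum>l<P. Mj j $$ (a,l) * (\<Sum>b<D. Mj j $$ (b,l) * y $ b))"
    if y: "y \<in> carrier_vec D" and a: "a < D" for y a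
  proof -
    have "(G *\<^sub>v y) $ a = (\<Sum>b<D. (\<Sum>j<K. \<Sum>l<P. Mj j $$ (a,l) * Mj j $$ (b,l)) * y $ b)"
      using mult_mat_vec_sum[OF G y a] a by (simp add: G_def)
    also have "\<dots> = (\<Sum>j<K. \<Sum>l<P. Mj j $$ (a,l) * (\<Sum>b<D. Mj j $$ (b,l) * y $ b))"
      by (simp add: sum_distrib_left sum_distrib_right mult.assoc sum.swap[of _ "{..<D}"])
    finally show ?thesis .
  qed
  have detG: "det G \<noteq> 0"
  proof
    assume "det G = 0"
    then obtain y where y: "y \<in> carrier_vec D" "y \<noteq> 0\<^sub>v D" "G *\<^sub>v y = 0\<^sub>v D"
      using det_0_iff_vec_prod_zero[OF G] by auto
    define w where "w = (\<lambda>j l. \<Sum>b<D. Mj j $$ (b,l) * y $ b)"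
    have "(\<Sum>a<D. y $ a * (G *\<^sub>v y) $ a) = 0" using y(3) by simp
    moreover have "(\<Sum>a<D. y $ a * (G *\<^sub>v y) $ a) = (\<Sum>j<K. \<Sum>l<P. (w j l)\<^sup>2)"
    proof -
      have "(\<Sum>a<D. y $ a * (G *\<^sub>v y) $ a) = (\<Sum>a<D. y $ a * (\<Sum>j<K. \<Sum>l<P. Mj j $$ (a,l) * w j l))"
        using Gy[OF y(1)] unfolding w_def by (intro sum.cong refl) simp
      also have "\<dots> = (\<Sum>j<K. \<Sum>l<P. (\<Sum>a<D. Mj j $$ (a,l) * y $ a) * w j l)"
        by (simp add: sum_distrib_left sum_distrib_right mult_ac sum.swap[of _ "{..<D}"])
      also have "\<dots> = (\<Sum>j<K. \<Sum>l<P. w j l * w j l)"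
        unfolding w_def by simp
      finally show ?thesis by (simp add: power2_eq_square)
    qed
    ultimately have s0: "(\<Sum>j<K. \<Sum>l<P. (w j l)\<^sup>2) = 0" by simp
    have w0: "w j l = 0" if "j < K" "l < P" for j l
    proof -
      have "(\<Sum>l<P. (w j l)\<^sup>2) = 0"
        using s0 that by (subst (asm) sum_nonneg_eq_0_iff) (auto intro: sum_nonneg)
      hence "(w j l)\<^sup>2 = 0" using that by (subst (asm) sum_nonneg_eq_0_iff) auto
      thus ?thesis by simp
    qed
    define \<eta> where "\<eta> = cpx (mat 1 D (\<lambda>(_,a). y $ a))"
    have ec: "\<eta> \<in> carrier_mat 1 D" unfolding \<eta>_def by (simp add: cpx_def)
    have "\<eta> \<in> Lk (cpx Phi) (cpx Psi) K"
    proof -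
      have "\<eta> * (cpx Phi ^\<^sub>m j * cpx Psi) = 0\<^sub>m 1 P" if j: "j < K" for j
      proof -
        have eq: "cpx Phi ^\<^sub>m j * cpx Psi = cpx (Mj j)"
          unfolding Mj_def using cpx_mult[OF pow_carrier_mat[OF Phi] Psi] cpx_pow[OF Phi] by simp
        have Mjc: "cpx (Mj j) \<in> carrier_mat D P" using Mj by simp
        show ?thesis unfolding eq
        proof (rule eq_matI)
          fix a l assume al: "a < dim_row (0\<^sub>m 1 P :: complex mat)" "l < dim_col (0\<^sub>m 1 P :: complex mat)"
          hence a0: "a = 0" and l: "l < P" by auto
          have "(\<eta> * cpx (Mj j)) $$ (0,l) = (\<Sum>b<D. \<eta> $$ (0,b) * cpx (Mj j) $$ (b,l))"
            using mult_mat_entry[OF ec Mjc _ l] by simp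
          also have "\<dots> = (\<Sum>b<D. complex_of_real (Mj j $$ (b,l) * y $ b))"
            using Mj[of j] l by (intro sum.cong refl) (auto simp: \<eta>_def cpx_def)
          also have "\<dots> = complex_of_real (w j l)"
            unfolding w_def by (simp add: of_real_sum)
          also have "\<dots> = 0" using w0 j l by simp
          finally show "(\<eta> * cpx (Mj j)) $$ (a,l) = 0\<^sub>m 1 P $$ (a,l)" using a0 l by simp
        qed (use ec Mjc in auto)
      qed
      thus ?thesis using ec Fc Gc unfolding Lk_def by auto
    qed
    hence "\<eta> = 0\<^sub>m 1 D" using K by blast
    have "y = 0\<^sub>v D"
    proof (rule eq_vecI)
      fix a assume "a < dim_vec (0\<^sub>v D :: real vec)"
      hence a: "a < D" by simp
      have "\<eta> $$ (0,a) = complex_of_real (y $ a)" unfolding \<eta>_def cpx_def using a by simp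
      thus "y $ a = 0\<^sub>v D $ a" using \<open>\<eta> = 0\<^sub>m 1 D\<close> a by simp
    qed (use y in simp)
    thus False using y(2) by simp
  qed
  show ?thesis unfolding dt_controllable_def
  proof (intro ballI)
    fix X0 :: "real vec" assume "X0 \<in> carrier_vec (dim_row Phi)"
    hence X0: "X0 \<in> carrier_vec D" using Phi by simp
    define x where "x = - (Phi ^\<^sub>m K *\<^sub>v X0)"
    have x: "x \<in> carrier_vec D" unfolding x_def using mult_mat_vec_carrier[OF pow_carrier_mat[OF Phi] X0] by simp
    obtain y where y: "y \<in> carrier_vec D" "G *\<^sub>v y = x" using solve_exists[OF G detG x] by blast
    define U where "U = (\<lambda>i. vec P (\<lambda>l. \<Sum>b<D. Mj (K - Suc i) $$ (b,l) * y $ b))"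
    have U: "\<forall>j. U j \<in> carrier_vec P" unfolding U_def by simp
    from traj_formula[OF Phi Psi X0 U, of K]
    have tc: "traj Phi Psi X0 U K \<in> carrier_vec D" and te: "\<forall>a<D. traj Phi Psi X0 U K $ a =
     (Phi ^\<^sub>m K *\<^sub>v X0) $ a + (\<Sum>i<K. \<Sum>l<P. (Phi ^\<^sub>m (K - Suc i) * Psi) $$ (a,l) * U i $ l)" by auto
    have "traj Phi Psi X0 U K = 0\<^sub>v D"
    proof (rule eq_vecI)
      fix a assume "a < dim_vec (0\<^sub>v D :: real vec)"
      hence a: "a < D" by simp
      have "(\<Sum>i<K. \<Sum>l<P. (Phi ^\<^sub>m (K - Suc i) * Psi) $$ (a,l) * U i $ l)
          = (\<Sum>i<K. (\<lambda>j. \<Sum>l<P. Mj j $$ (a,l) * (\<Sum>b<D. Mj j $$ (b,l) * y $ b)) (K - Suc i))"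
        unfolding U_def Mj_def by (intro sum.cong refl) simp
      also have "\<dots> = (\<Sum>j<K. \<Sum>l<P. Mj j $$ (a,l) * (\<Sum>b<D. Mj j $$ (b,l) * y $ b))"
        by (rule sum.nat_diff_reindex)
      also have "\<dots> = x $ a" using Gy[OF y(1) a] y(2) by simp
      also have "\<dots> = - (Phi ^\<^sub>m K *\<^sub>v X0) $ a" unfolding x_def using a Phi X0 by simp
      finally show "traj Phi Psi X0 U K $ a = 0\<^sub>v D $ a" using te a by simp
    qed (use tc in simp)
    thus "\<exists>U K. (\<forall>k. U k \<in> carrier_vec (dim_col Psi)) \<and> traj Phi Psi X0 U K = 0\<^sub>v (dim_row Phi)"
      using U Phi Psi by auto
  qed
qed



lemma sum_split:
  fixes N n :: nat and f :: "nat \<Rightarrow> 'a::comm_monoid_add"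
  shows "(\<Sum>i<N*n. f i) = (\<Sum>a<N. \<Sum>b<n. f (a*n+b))"
proof -
  have "(\<Sum>i<N*n. f i) = (\<Sum>a<N. sum f {a*n..<a*n+n})" using sum.nat_group[of f n N] by simp
  also have "\<dots> = (\<Sum>a<N. \<Sum>b<n. f (a*n+b))"
  proof (rule sum.cong[OF refl])
    fix a
    have "{a*n..<a*n+n} = (\<lambda>b. a*n+b) ` {..<n}"
    proof (rule subset_antisym)
      show "{a*n..<a*n+n} \<subseteq> (\<lambda>b. a*n+b) ` {..<n}"
      proof (rule subsetI)
        fix x assume "x \<in> {a*n..<a*n+n}"
        hence "x - a*n \<in> {..<n}" "x = a*n + (x - a*n)" by auto
        thus "x \<in> (\<lambda>b. a*n+b) ` {..<n}" by blast
      qed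
    qed auto
    thus "sum f {a*n..<a*n+n} = (\<Sum>b<n. f (a*n+b))"
      by (simp add: sum.reindex inj_on_def)
  qed
  finally show ?thesis .
qed

lemma left_eig_eigenvalue:
  fixes E \<xi> :: "complex mat"
  assumes E: "E \<in> carrier_mat n n" and xi: "\<xi> \<in> carrier_mat 1 n" and nz: "\<xi> \<noteq> 0\<^sub>m 1 n"
    and eig: "\<xi> * E = \<theta> \<cdot>\<^sub>m \<xi>"
  shows "eigenvalue E \<theta>"
proof -
  define CM where "CM = char_matrix E \<theta>"
  have CM: "CM \<in> carrier_mat n n" unfolding CM_def char_matrix_def using E by simp
  define x where "x = vec n (\<lambda>i. \<xi> $$ (0,i))"
  have x: "x \<in> carrier_vec n" unfolding x_def by simp
  have xnz: "x \<noteq> 0\<^sub>v n"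
  proof
    assume x0: "x = 0\<^sub>v n"
    have "\<xi> = 0\<^sub>m 1 n"
    proof (rule eq_matI)
      fix i j assume "i < dim_row (0\<^sub>m 1 n :: complex mat)" "j < dim_col (0\<^sub>m 1 n :: complex mat)"
      hence ij: "i = 0" "j < n" by auto
      have "\<xi> $$ (0,j) = x $ j" using ij by (simp add: x_def)
      thus "\<xi> $$ (i,j) = 0\<^sub>m 1 n $$ (i,j)" using x0 ij by simp
    qed (use xi in auto)
    thus False using nz by simp
  qed
  have "transpose_mat CM *\<^sub>v x = 0\<^sub>v n"
  proof (rule eq_vecI)
    fix j assume "j < dim_vec (0\<^sub>v n :: complex vec)"
    hence j: "j < n" by simp
    have tCM: "transpose_mat CM \<in> carrier_mat n n" using CM by simp
    have "(transpose_mat CM *\<^sub>v x) $ j = (\<Sum>i<n. CM $$ (i,j) * \<xi> $$ (0,i))"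
      using mult_mat_vec_sum[OF tCM x j] CM j by (auto simp: x_def intro!: sum.cong)
    also have "\<dots> = (\<Sum>i<n. \<xi> $$ (0,i) * E $$ (i,j)) - (\<Sum>i<n. if i = j then \<theta> * \<xi> $$ (0,i) else 0)"
      unfolding sum_subtractf[symmetric] using E j
      by (intro sum.cong refl) (auto simp: CM_def char_matrix_def algebra_simps)
    also have "(\<Sum>i<n. \<xi> $$ (0,i) * E $$ (i,j)) = (\<xi> * E) $$ (0,j)"
      using mult_mat_entry[OF xi E _ j] by simp
    also have "\<dots> = \<theta> * \<xi> $$ (0,j)" using eig xi j by simp
    finally show "(transpose_mat CM *\<^sub>v x) $ j = 0\<^sub>v n $ j" using j by simp
  qed (use CM in simp)
  hence "det (transpose_mat CM) = 0" using det_0_iff_vec_prod_zero[of "transpose_mat CM" n] CM x xnz by auto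
  hence "det CM = 0" using det_transpose[OF CM] by simp
  thus ?thesis using eigenvalue_det[OF E] unfolding CM_def by simp
qed

lemma circ_first_nonzero:
  fixes W :: "real mat" and v :: "complex mat"
  assumes N: "N \<ge> 2" and W: "W \<in> carrier_mat N N"
    and W1N: "W $$ (0, N - 1) \<noteq> 0"
    and Wsub: "\<forall>i. 1 \<le> i \<and> i < N \<longrightarrow> W $$ (i, i - 1) \<noteq> 0"
    and Wzero: "\<forall>i<N. \<forall>j<N. \<not> (i = 0 \<and> j = N - 1) \<and> \<not> (1 \<le> i \<and> j = i - 1) \<longrightarrow> W $$ (i, j) = 0"
    and v: "v \<in> carrier_mat 1 N" and eig: "v * cpx W = lam \<cdot>\<^sub>m v"
    and nz: "\<exists>j<N. v $$ (0,j) \<noteq> 0"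
  shows "v $$ (0,0) \<noteq> 0"
proof
  assume v0: "v $$ (0,0) = 0"
  define \<sigma> where "\<sigma> = (\<lambda>j::nat. if j = N - 1 then 0 else Suc j)"
  have Wc: "cpx W \<in> carrier_mat N N" using W by simp
  have key: "lam * v $$ (0,j) = v $$ (0, \<sigma> j) * complex_of_real (W $$ (\<sigma> j, j))" if j: "j < N" for j
  proof -
    have "lam * v $$ (0,j) = (v * cpx W) $$ (0,j)" using eig v j by simp
    also have "\<dots> = (\<Sum>i<N. v $$ (0,i) * cpx W $$ (i,j))" using mult_mat_entry[OF v Wc _ j] by simp
    also have "\<dots> = (\<Sum>i<N. if i = \<sigma> j then v $$ (0, \<sigma> j) * complex_of_real (W $$ (\<sigma> j, j)) else 0)"
    proof (intro sum.cong refl)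
      fix i assume i: "i \<in> {..<N}"
      show "v $$ (0,i) * cpx W $$ (i,j) = (if i = \<sigma> j then v $$ (0, \<sigma> j) * complex_of_real (W $$ (\<sigma> j, j)) else 0)"
      proof (cases "i = \<sigma> j")
        case True thus ?thesis using i j W by (simp add: cpx_def)
      next
        case False
        have "\<not> (i = 0 \<and> j = N - 1) \<and> \<not> (1 \<le> i \<and> j = i - 1)" using False i j N by (auto simp: \<sigma>_def split: if_splits)
        hence "W $$ (i,j) = 0" using Wzero i j by auto
        thus ?thesis using False i j W by (simp add: cpx_def)
      qed
    qed
    also have "\<dots> = v $$ (0, \<sigma> j) * complex_of_real (W $$ (\<sigma> j, j))"
      using j N by (auto simp: sum.delta \<sigma>_def)
    finally show ?thesis .
  qed
  have Wnz: "W $$ (\<sigma> j, j) \<noteq> 0" if "j < N" for j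
    using that W1N Wsub[rule_format, of "Suc j"] N by (auto simp: \<sigma>_def)
  have allz: "v $$ (0,j) = 0" if j: "j < N" for j
  proof (cases "lam = 0")
    case True
    show ?thesis
    proof (cases j)
      case 0 thus ?thesis using v0 by simp
    next
      case (Suc j')
      have "j' < N" "j' \<noteq> N - 1" using j Suc by auto
      hence "v $$ (0, Suc j') * complex_of_real (W $$ (Suc j', j')) = 0"
        using key[of j'] True by (simp add: \<sigma>_def)
      moreover have "W $$ (Suc j', j') \<noteq> 0" using Wnz[of j'] \<open>j' < N\<close> \<open>j' \<noteq> N - 1\<close> by (simp add: \<sigma>_def)
      ultimately show ?thesis using Suc by simp
    qed
  next
    case False
    have "v $$ (0, N - 1 - d) = 0" if "d < N" for d
      using that
    proof (induction d)
      case 0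
      have "lam * v $$ (0, N - 1) = 0" using key[of "N - 1"] N v0 by (simp add: \<sigma>_def)
      thus ?case using False by simp
    next
      case (Suc d)
      have IH: "v $$ (0, N - 1 - d) = 0" using Suc by simp
      have "\<sigma> (N - 1 - Suc d) = N - 1 - d" using Suc.prems by (auto simp: \<sigma>_def)
      hence "lam * v $$ (0, N - 1 - Suc d) = 0" using key[of "N - 1 - Suc d"] IH N by simp
      thus ?case using False by simp
    qed
    from this[of "N - 1 - j"] show ?thesis using j by simp
  qed
  thus False using nz by blast
qed



lemma kron_carrier: "kron P Q \<in> carrier_mat (dim_row P * dim_row Q) (dim_col P * dim_col Q)"
  unfolding kron_def by simp

lemma kron_entry:
  assumes "P \<in> carrier_mat a b" "Q \<in> carrier_mat c d" "i < a*c" "j < b*d"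
  shows "kron P Q $$ (i,j) = P $$ (i div c, j div d) * Q $$ (i mod c, j mod d)"
  using assms unfolding kron_def by simp

lemma idx_lt: "a < N \<Longrightarrow> b < n \<Longrightarrow> a*n+b < N*(n::nat)"
proof -
  assume a: "a < N" and b: "b < n"
  have "a*n+b < a*n+n" using b by simp
  also have "\<dots> = Suc a * n" by simp
  also have "\<dots> \<le> N * n" using a by (intro mult_le_mono1) simp
  finally show ?thesis .
qed

lemma idx_div: "b < (n::nat) \<Longrightarrow> (a*n+b) div n = a"
  by simp

lemma idx_mod: "b < (n::nat) \<Longrightarrow> (a*n+b) mod n = b"
  by simp

lemma triple_swap:
  "(\<Sum>a\<in>A. \<Sum>b\<in>B. \<Sum>k\<in>C. f a b k) = (\<Sum>k\<in>C. \<Sum>b\<in>B. \<Sum>a\<in>A. f a b k)"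
proof -
  have "(\<Sum>a\<in>A. \<Sum>b\<in>B. \<Sum>k\<in>C. f a b k) = (\<Sum>a\<in>A. \<Sum>k\<in>C. \<Sum>b\<in>B. f a b k)"
    by (rule sum.cong[OF refl], rule sum.swap)
  also have "\<dots> = (\<Sum>k\<in>C. \<Sum>a\<in>A. \<Sum>b\<in>B. f a b k)" by (rule sum.swap)
  also have "\<dots> = (\<Sum>k\<in>C. \<Sum>b\<in>B. \<Sum>a\<in>A. f a b k)"
    by (rule sum.cong[OF refl], rule sum.swap)
  finally show ?thesis .
qed

theorem corollary7:
  fixes N n m p :: nat and A B C H W Dl :: "real mat" and h :: real
    and v :: "nat \<Rightarrow> complex mat" and lam :: "nat \<Rightarrow> complex"
  assumes N: "N \<ge> 2" and pos: "n > 0" "m > 0" "p > 0"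
    and A: "A \<in> carrier_mat n n" and B: "B \<in> carrier_mat n p"
    and C: "C \<in> carrier_mat m n" and H: "H \<in> carrier_mat n m"
    and h: "h > 0"
    and W: "W \<in> carrier_mat N N"
    and W1N: "W $$ (0, N - 1) \<noteq> 0"
    and Wsub: "\<forall>i. 1 \<le> i \<and> i < N \<longrightarrow> W $$ (i, i - 1) \<noteq> 0"
    and Wzero: "\<forall>i<N. \<forall>j<N. \<not> (i = 0 \<and> j = N - 1) \<and> \<not> (1 \<le> i \<and> j = i - 1) \<longrightarrow> W $$ (i, j) = 0"
    and Delta: "Dl = mat N N (\<lambda>(i,j). if i = 0 \<and> j = 0 then 1 else 0)"
    and v_dim: "\<forall>k<N. v k \<in> carrier_mat 1 N"
    and v_eig: "\<forall>k<N. v k * cpx W = lam k \<cdot>\<^sub>m v k"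
    and v_indep: "\<forall>c :: nat \<Rightarrow> complex.
                    (\<forall>j<N. (\<Sum>k<N. c k * v k $$ (0, j)) = 0) \<longrightarrow> (\<forall>k<N. c k = 0)"
    and ctrl: "\<forall>k<N. controllable_pair
                 (cpx (mexp A h) + lam k \<cdot>\<^sub>m cpx (mexp_int A h * H * C))
                 (cpx (mexp_int A h * B))"
    and common: "\<forall>K \<theta> \<xi>. K \<subseteq> {..<N} \<and> 1 < card K \<and>
                  (\<forall>k\<in>K. eigenvalue (cpx (mexp A h) + lam k \<cdot>\<^sub>m cpx (mexp_int A h * H * C)) \<theta>) \<and>
                  (\<forall>k\<in>K. \<xi> k \<in> left_eigenspace \<theta>
                           (cpx (mexp A h) + lam k \<cdot>\<^sub>m cpx (mexp_int A h * H * C))) \<and>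
                  (\<exists>k\<in>K. \<xi> k \<noteq> 0\<^sub>m 1 n)
                  \<longrightarrow> mat 1 (N * n) (\<lambda>(i,j). \<Sum>k\<in>K. kron (v k) (\<xi> k) $$ (0, j))
                        * cpx (kron Dl (mexp_int A h * B)) \<noteq> 0\<^sub>m 1 (N * p)"
  shows "dt_controllable (kron (1\<^sub>m N) (mexp A h) + kron W (mexp_int A h * H * C))
                         (kron Dl (mexp_int A h * B))"
proof -
  define E0 where "E0 = mexp A h"
  define Ii where "Ii = mexp_int A h"
  define Hm where "Hm = Ii * H * C"
  define Bm where "Bm = Ii * B"
  have E0: "E0 \<in> carrier_mat n n" unfolding E0_def mexp_def using A by simp
  have Ii: "Ii \<in> carrier_mat n n" unfolding Ii_def mexp_int_def using A by simp
  have Hm: "Hm \<in> carrier_mat n n" unfolding Hm_def using mult_carrier_mat[OF mult_carrier_mat[OF Ii H] C] .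
  have Bm: "Bm \<in> carrier_mat n p" unfolding Bm_def using mult_carrier_mat[OF Ii B] .
  have Dl: "Dl \<in> carrier_mat N N" unfolding Delta by simp
  have Npos: "N > 0" using N by simp
  define Phi where "Phi = kron (1\<^sub>m N) E0 + kron W Hm"
  define Psi where "Psi = kron Dl Bm"
  have K1: "kron (1\<^sub>m N) E0 \<in> carrier_mat (N*n) (N*n)" using kron_carrier[of "1\<^sub>m N" E0] E0 by simp
  have K2: "kron W Hm \<in> carrier_mat (N*n) (N*n)" using kron_carrier[of W Hm] W Hm by simp
  have Phi: "Phi \<in> carrier_mat (N*n) (N*n)" unfolding Phi_def using K1 K2 by simp
  have Psi: "Psi \<in> carrier_mat (N*n) (N*p)" unfolding Psi_def using kron_carrier[of Dl Bm] Dl Bm by simp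
  have Phi_entry: "Phi $$ (a*n+b, a'*n+b') = (if a = a' then E0 $$ (b,b') else 0) + W $$ (a,a') * Hm $$ (b,b')"
    if ab: "a < N" "a' < N" "b < n" "b' < n" for a a' b b'
  proof -
    have i: "a*n+b < N*n" and j: "a'*n+b' < N*n" using idx_lt ab by auto
    have "Phi $$ (a*n+b, a'*n+b') = kron (1\<^sub>m N) E0 $$ (a*n+b, a'*n+b') + kron W Hm $$ (a*n+b, a'*n+b')"
      unfolding Phi_def using K1 K2 i j by simp
    also have "kron (1\<^sub>m N) E0 $$ (a*n+b, a'*n+b') = 1\<^sub>m N $$ (a, a') * E0 $$ (b,b')"
      using kron_entry[of "1\<^sub>m N" N N E0 n n, OF _ E0 i j] ab by (simp add: idx_div idx_mod)
    also have "kron W Hm $$ (a*n+b, a'*n+b') = W $$ (a, a') * Hm $$ (b,b')"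
      using kron_entry[OF W Hm i j] ab by (simp add: idx_div idx_mod)
    finally show ?thesis using ab by simp
  qed
  have Psi_entry: "Psi $$ (a*n+b, l) = (if a = 0 then Bm $$ (b,l) else 0)"
    if ab: "a < N" "b < n" "l < p" for a b l
  proof -
    have i: "a*n+b < N*n" using idx_lt ab by auto
    have j: "l < N*p" using ab Npos by (metis idx_lt add_0 mult_0)
    have "Psi $$ (a*n+b, l) = Dl $$ (a, l div p) * Bm $$ (b, l mod p)"
      unfolding Psi_def using kron_entry[OF Dl Bm i j] ab by (simp add: idx_div idx_mod)
    also have "\<dots> = Dl $$ (a, 0) * Bm $$ (b, l)" using ab by simp
    finally show ?thesis using ab Npos unfolding Delta by simp
  qed
  have "dt_controllable Phi Psi"
  proof (rule pbh_dt[OF Phi Psi], intro allI impI)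
    fix \<theta> \<eta> assume \<eta>c: "\<eta> \<in> carrier_mat 1 (N*n)" and eig: "\<eta> * cpx Phi = \<theta> \<cdot>\<^sub>m \<eta>"
      and z: "\<eta> * cpx Psi = 0\<^sub>m 1 (N*p)"
    define V where "V = mat N N (\<lambda>(k,a). v k $$ (0,a))"
    have V: "V \<in> carrier_mat N N" unfolding V_def by simp
    have tV: "transpose_mat V \<in> carrier_mat N N" using V by simp
    have detV: "det (transpose_mat V) \<noteq> 0"
    proof
      assume "det (transpose_mat V) = 0"
      then obtain c where c: "c \<in> carrier_vec N" "c \<noteq> 0\<^sub>v N" "transpose_mat V *\<^sub>v c = 0\<^sub>v N"
        using det_0_iff_vec_prod_zero[OF tV] by auto
      have "\<forall>j<N. (\<Sum>k<N. c$k * v k $$ (0,j)) = 0"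
      proof (intro allI impI)
        fix j assume j: "j < N"
        have "(transpose_mat V *\<^sub>v c) $ j = (\<Sum>k<N. transpose_mat V $$ (j,k) * c $ k)"
          using mult_mat_vec_sum[OF tV c(1) j] .
        also have "\<dots> = (\<Sum>k<N. c$k * v k $$ (0,j))" using j by (intro sum.cong refl) (auto simp: V_def)
        finally show "(\<Sum>k<N. c$k * v k $$ (0,j)) = 0" using c(3) j by simp
      qed
      hence "\<forall>k<N. c$k = 0" using spec[OF v_indep, of "\<lambda>k. c$k"] by blast
      hence "c = 0\<^sub>v N" using c(1) by (intro eq_vecI) auto
      thus False using c(2) by simp
    qed
    obtain Y where Y: "Y \<in> carrier_mat N N" "transpose_mat V * Y = 1\<^sub>m N"
      using inv_exists[OF tV detV] by auto
    have VY: "(\<Sum>k<N. v k $$ (0,a') * Y $$ (k,a)) = (if a' = a then 1 else 0)" if aa: "a' < N" "a < N" for a' a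
    proof -
      have "(transpose_mat V * Y) $$ (a',a) = (\<Sum>k<N. transpose_mat V $$ (a',k) * Y $$ (k,a))"
        using mult_mat_entry[OF tV Y(1) aa] .
      also have "\<dots> = (\<Sum>k<N. v k $$ (0,a') * Y $$ (k,a))" using aa by (intro sum.cong refl) (auto simp: V_def)
      finally show ?thesis using Y(2) aa by simp
    qed
    define \<xi> where "\<xi> = (\<lambda>k. mat 1 n (\<lambda>(_,b). \<Sum>a<N. Y $$ (k,a) * \<eta> $$ (0, a*n+b)))"
    have \<xi>c: "\<xi> k \<in> carrier_mat 1 n" for k unfolding \<xi>_def by simp
    have \<xi>e: "\<xi> k $$ (0,b) = (\<Sum>a<N. Y $$ (k,a) * \<eta> $$ (0, a*n+b))" if "b < n" for k b
      using that unfolding \<xi>_def by simp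
    have D1: "\<eta> $$ (0, a'*n+b) = (\<Sum>k<N. v k $$ (0,a') * \<xi> k $$ (0,b))" if a': "a' < N" and b: "b < n" for a' b
    proof -
      have "(\<Sum>k<N. v k $$ (0,a') * \<xi> k $$ (0,b)) = (\<Sum>k<N. \<Sum>a<N. v k $$ (0,a') * Y $$ (k,a) * \<eta> $$ (0, a*n+b))"
        using b by (simp add: \<xi>e sum_distrib_left mult.assoc)
      also have "\<dots> = (\<Sum>a<N. \<Sum>k<N. v k $$ (0,a') * Y $$ (k,a) * \<eta> $$ (0, a*n+b))"
        by (rule sum.swap)
      also have "\<dots> = (\<Sum>a<N. (\<Sum>k<N. v k $$ (0,a') * Y $$ (k,a)) * \<eta> $$ (0, a*n+b))"
        by (simp add: sum_distrib_right)
      also have "\<dots> = (\<Sum>a<N. (if a' = a then \<eta> $$ (0, a*n+b) else 0))"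
        using a' by (intro sum.cong refl) (simp add: VY)
      also have "\<dots> = \<eta> $$ (0, a'*n+b)" using a' by (simp add: sum.delta)
      finally show ?thesis by simp
    qed
    define Ec where "Ec = (\<lambda>k. cpx (mexp A h) + lam k \<cdot>\<^sub>m cpx (mexp_int A h * H * C))"
    have Ec_eq: "Ec k = cpx E0 + lam k \<cdot>\<^sub>m cpx Hm" for k unfolding Ec_def E0_def Hm_def Ii_def by simp
    have Ecc: "Ec k \<in> carrier_mat n n" for k unfolding Ec_eq using E0 Hm by simp
    define Bc where "Bc = cpx (mexp_int A h * B)"
    have Bc_eq: "Bc = cpx Bm" unfolding Bc_def Bm_def Ii_def by simp
    have Bcc: "Bc \<in> carrier_mat n p" unfolding Bc_eq using Bm by simp
    have Ece: "(\<xi> k * Ec k) $$ (0,b') = (\<Sum>b<n. \<xi> k $$ (0,b) * (complex_of_real (E0 $$ (b,b')) + lam k * complex_of_real (Hm $$ (b,b'))))"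
      if b': "b' < n" for k b'
    proof -
      have "(\<xi> k * Ec k) $$ (0,b') = (\<Sum>b<n. \<xi> k $$ (0,b) * Ec k $$ (b,b'))"
        using mult_mat_entry[OF \<xi>c Ecc _ b'] by simp
      also have "\<dots> = (\<Sum>b<n. \<xi> k $$ (0,b) * (complex_of_real (E0 $$ (b,b')) + lam k * complex_of_real (Hm $$ (b,b'))))"
        using b' E0 Hm by (intro sum.cong refl) (simp add: Ec_eq cpx_def)
      finally show ?thesis .
    qed
    have Bce: "(\<xi> k * Bc) $$ (0,l) = (\<Sum>b<n. \<xi> k $$ (0,b) * complex_of_real (Bm $$ (b,l)))"
      if l: "l < p" for k l
    proof -
      have "(\<xi> k * Bc) $$ (0,l) = (\<Sum>b<n. \<xi> k $$ (0,b) * Bc $$ (b,l))"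
        using mult_mat_entry[OF \<xi>c Bcc _ l] by simp
      also have "\<dots> = (\<Sum>b<n. \<xi> k $$ (0,b) * complex_of_real (Bm $$ (b,l)))"
        using l Bm by (intro sum.cong refl) (simp add: Bc_eq cpx_def)
      finally show ?thesis .
    qed
    have vW: "(\<Sum>a<N. v k $$ (0,a) * complex_of_real (W $$ (a,a'))) = lam k * v k $$ (0,a')"
      if k: "k < N" and a': "a' < N" for k a'
    proof -
      have vk: "v k \<in> carrier_mat 1 N" using v_dim k by blast
      have Wc: "cpx W \<in> carrier_mat N N" using W by simp
      have "(\<Sum>a<N. v k $$ (0,a) * complex_of_real (W $$ (a,a'))) = (\<Sum>a<N. v k $$ (0,a) * cpx W $$ (a,a'))"
        using a' W by (intro sum.cong refl) (simp add: cpx_def)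
      also have "\<dots> = (v k * cpx W) $$ (0,a')" using mult_mat_entry[OF vk Wc _ a'] by simp
      also have "\<dots> = lam k * v k $$ (0,a')" using v_eig k a' vk by simp
      finally show ?thesis .
    qed
    have PhiE: "(\<eta> * cpx Phi) $$ (0, a'*n+b') = (\<Sum>k<N. v k $$ (0,a') * (\<xi> k * Ec k) $$ (0,b'))"
      if a': "a' < N" and b': "b' < n" for a' b'
    proof -
      have j: "a'*n+b' < N*n" by (rule idx_lt[OF a' b'])
      have cPhi: "cpx Phi \<in> carrier_mat (N*n) (N*n)" using Phi by simp
      let ?e = "\<lambda>b b'. complex_of_real (E0 $$ (b,b'))"
      let ?h = "\<lambda>b b'. complex_of_real (Hm $$ (b,b'))"
      let ?w = "\<lambda>a a'. complex_of_real (W $$ (a,a'))"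
      have "(\<eta> * cpx Phi) $$ (0, a'*n+b') = (\<Sum>i<N*n. \<eta> $$ (0,i) * cpx Phi $$ (i, a'*n+b'))"
        using mult_mat_entry[OF \<eta>c cPhi _ j] by simp
      also have "\<dots> = (\<Sum>a<N. \<Sum>b<n. \<eta> $$ (0,a*n+b) * cpx Phi $$ (a*n+b, a'*n+b'))" by (rule sum_split)
      also have "\<dots> = (\<Sum>a<N. \<Sum>b<n. (if a = a' then \<eta> $$ (0,a*n+b) * ?e b b' else 0)
                      + \<eta> $$ (0,a*n+b) * ?w a a' * ?h b b')"
      proof (intro sum.cong refl)
        fix a b assume a: "a \<in> {..<N}" and b: "b \<in> {..<n}"
        have i: "a*n+b < N*n" using idx_lt a b by auto
        show "\<eta> $$ (0,a*n+b) * cpx Phi $$ (a*n+b, a'*n+b') = (if a = a' then \<eta> $$ (0,a*n+b) * ?e b b' else 0)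
                      + \<eta> $$ (0,a*n+b) * ?w a a' * ?h b b'"
          using Phi_entry[of a a' b b'] a b a' b' i j Phi by (simp add: cpx_def distrib_left mult.assoc)
      qed
      also have "\<dots> = (\<Sum>a<N. \<Sum>b<n. (if a = a' then \<eta> $$ (0,a*n+b) * ?e b b' else 0))
                      + (\<Sum>a<N. \<Sum>b<n. \<eta> $$ (0,a*n+b) * ?w a a' * ?h b b')"
        by (simp add: sum.distrib)
      also have "(\<Sum>a<N. \<Sum>b<n. (if a = a' then \<eta> $$ (0,a*n+b) * ?e b b' else 0))
               = (\<Sum>b<n. \<eta> $$ (0,a'*n+b) * ?e b b')"
      proof -
        have "(\<Sum>a<N. \<Sum>b<n. (if a = a' then \<eta> $$ (0,a*n+b) * ?e b b' else 0))
            = (\<Sum>a<N. if a = a' then (\<Sum>b<n. \<eta> $$ (0,a*n+b) * ?e b b') else 0)"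
          by (rule sum.cong[OF refl]) simp
        also have "\<dots> = (\<Sum>b<n. \<eta> $$ (0,a'*n+b) * ?e b b')" using a' by (simp add: sum.delta)
        finally show ?thesis .
      qed
      also have "(\<Sum>b<n. \<eta> $$ (0,a'*n+b) * ?e b b') = (\<Sum>k<N. v k $$ (0,a') * (\<Sum>b<n. \<xi> k $$ (0,b) * ?e b b'))"
      proof -
        have "(\<Sum>b<n. \<eta> $$ (0,a'*n+b) * ?e b b') = (\<Sum>b<n. \<Sum>k<N. v k $$ (0,a') * \<xi> k $$ (0,b) * ?e b b')"
          using a' by (intro sum.cong refl) (simp add: D1 sum_distrib_right)
        also have "\<dots> = (\<Sum>k<N. \<Sum>b<n. v k $$ (0,a') * \<xi> k $$ (0,b) * ?e b b')" by (rule sum.swap)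
        also have "\<dots> = (\<Sum>k<N. v k $$ (0,a') * (\<Sum>b<n. \<xi> k $$ (0,b) * ?e b b'))"
          by (simp add: sum_distrib_left mult.assoc)
        finally show ?thesis .
      qed
      also have "(\<Sum>a<N. \<Sum>b<n. \<eta> $$ (0,a*n+b) * ?w a a' * ?h b b')
               = (\<Sum>k<N. v k $$ (0,a') * (lam k * (\<Sum>b<n. \<xi> k $$ (0,b) * ?h b b')))"
      proof -
        have "(\<Sum>a<N. \<Sum>b<n. \<eta> $$ (0,a*n+b) * ?w a a' * ?h b b')
            = (\<Sum>a<N. \<Sum>b<n. \<Sum>k<N. (v k $$ (0,a) * ?w a a') * (\<xi> k $$ (0,b) * ?h b b'))"
          by (intro sum.cong refl) (simp add: D1 sum_distrib_right sum_distrib_left mult_ac)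
        also have "\<dots> = (\<Sum>k<N. \<Sum>b<n. \<Sum>a<N. (v k $$ (0,a) * ?w a a') * (\<xi> k $$ (0,b) * ?h b b'))"
          by (rule triple_swap)
        also have "\<dots> = (\<Sum>k<N. \<Sum>b<n. (\<Sum>a<N. v k $$ (0,a) * ?w a a') * (\<xi> k $$ (0,b) * ?h b b'))"
          by (simp add: sum_distrib_right)
        also have "\<dots> = (\<Sum>k<N. \<Sum>b<n. (lam k * v k $$ (0,a')) * (\<xi> k $$ (0,b) * ?h b b'))"
          using a' by (intro sum.cong refl) (simp add: vW)
        also have "\<dots> = (\<Sum>k<N. v k $$ (0,a') * (lam k * (\<Sum>b<n. \<xi> k $$ (0,b) * ?h b b')))"
          by (simp add: sum_distrib_left mult_ac)
        finally show ?thesis .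
      qed
      also have "(\<Sum>k<N. v k $$ (0,a') * (\<Sum>b<n. \<xi> k $$ (0,b) * ?e b b'))
               + (\<Sum>k<N. v k $$ (0,a') * (lam k * (\<Sum>b<n. \<xi> k $$ (0,b) * ?h b b')))
               = (\<Sum>k<N. v k $$ (0,a') * (\<xi> k * Ec k) $$ (0,b'))"
      proof -
        have "(\<Sum>k<N. v k $$ (0,a') * (\<xi> k * Ec k) $$ (0,b'))
            = (\<Sum>k<N. v k $$ (0,a') * (\<Sum>b<n. \<xi> k $$ (0,b) * ?e b b')
                 + v k $$ (0,a') * (lam k * (\<Sum>b<n. \<xi> k $$ (0,b) * ?h b b')))"
        proof (rule sum.cong[OF refl])
          fix k
          have "(\<Sum>b<n. \<xi> k $$ (0,b) * (?e b b' + lam k * ?h b b'))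
              = (\<Sum>b<n. \<xi> k $$ (0,b) * ?e b b') + (\<Sum>b<n. lam k * (\<xi> k $$ (0,b) * ?h b b'))"
            by (simp add: distrib_left sum.distrib mult.left_commute)
          also have "(\<Sum>b<n. lam k * (\<xi> k $$ (0,b) * ?h b b')) = lam k * (\<Sum>b<n. \<xi> k $$ (0,b) * ?h b b')"
            by (simp add: sum_distrib_left)
          finally show "v k $$ (0,a') * (\<xi> k * Ec k) $$ (0,b') = v k $$ (0,a') * (\<Sum>b<n. \<xi> k $$ (0,b) * ?e b b')
                 + v k $$ (0,a') * (lam k * (\<Sum>b<n. \<xi> k $$ (0,b) * ?h b b'))"
            unfolding Ece[OF b'] by (simp add: distrib_left)
        qed
        also have "\<dots> = (\<Sum>k<N. v k $$ (0,a') * (\<Sum>b<n. \<xi> k $$ (0,b) * ?e b b'))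
               + (\<Sum>k<N. v k $$ (0,a') * (lam k * (\<Sum>b<n. \<xi> k $$ (0,b) * ?h b b')))"
          by (rule sum.distrib)
        finally show ?thesis by simp
      qed
      finally show ?thesis .
    qed
    have \<xi>eig: "\<xi> k * Ec k = \<theta> \<cdot>\<^sub>m \<xi> k" if k: "k < N" for k
    proof -
      have "(\<xi> k * Ec k) $$ (0,b') = \<theta> * \<xi> k $$ (0,b')" if b': "b' < n" for b'
      proof -
        define c where "c = (\<lambda>k. (\<xi> k * Ec k) $$ (0,b') - \<theta> * \<xi> k $$ (0,b'))"
        have "\<forall>j<N. (\<Sum>k<N. c k * v k $$ (0,j)) = 0"
        proof (intro allI impI)
          fix j assume j: "j < N"
          have jj: "j*n+b' < N*n" using idx_lt[OF j b'] .
          have "(\<eta> * cpx Phi) $$ (0, j*n+b') = \<theta> * \<eta> $$ (0, j*n+b')" using eig \<eta>c jj by simp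
          hence "(\<Sum>k<N. v k $$ (0,j) * (\<xi> k * Ec k) $$ (0,b')) = (\<Sum>k<N. v k $$ (0,j) * (\<theta> * \<xi> k $$ (0,b')))"
            using PhiE[OF j b'] D1[OF j b'] by (simp add: sum_distrib_left mult_ac)
          thus "(\<Sum>k<N. c k * v k $$ (0,j)) = 0"
            unfolding c_def by (simp add: algebra_simps sum_subtractf)
        qed
        hence "c k = 0" using spec[OF v_indep, of c] k by blast
        thus ?thesis unfolding c_def by simp
      qed
      thus ?thesis using \<xi>c[of k] Ecc[of k] by (intro eq_matI) auto
    qed
    have PsiE: "(\<Sum>k<N. v k $$ (0,0) * (\<xi> k * Bc) $$ (0,l)) = 0" if l: "l < p" for l
    proof -
      have cPsi: "cpx Psi \<in> carrier_mat (N*n) (N*p)" using Psi by simp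
      have lN: "l < N*p" using l Npos by (metis idx_lt add_0 mult_0)
      have "(\<eta> * cpx Psi) $$ (0,l) = (\<Sum>i<N*n. \<eta> $$ (0,i) * cpx Psi $$ (i,l))"
        using mult_mat_entry[OF \<eta>c cPsi _ lN] by simp
      also have "\<dots> = (\<Sum>a<N. \<Sum>b<n. \<eta> $$ (0,a*n+b) * cpx Psi $$ (a*n+b,l))" by (rule sum_split)
      also have "\<dots> = (\<Sum>a<N. if a = 0 then (\<Sum>b<n. \<eta> $$ (0,a*n+b) * complex_of_real (Bm $$ (b,l))) else 0)"
      proof (rule sum.cong[OF refl])
        fix a assume a: "a \<in> {..<N}"
        have "(\<Sum>b<n. \<eta> $$ (0,a*n+b) * cpx Psi $$ (a*n+b,l))
            = (\<Sum>b<n. if a = 0 then \<eta> $$ (0,a*n+b) * complex_of_real (Bm $$ (b,l)) else 0)"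
        proof (rule sum.cong[OF refl])
          fix b assume b: "b \<in> {..<n}"
          have i: "a*n+b < N*n" using idx_lt a b by auto
          show "\<eta> $$ (0,a*n+b) * cpx Psi $$ (a*n+b,l) = (if a = 0 then \<eta> $$ (0,a*n+b) * complex_of_real (Bm $$ (b,l)) else 0)"
            using Psi_entry[of a b l] a b l i lN Psi by (simp add: cpx_def)
        qed
        thus "(\<Sum>b<n. \<eta> $$ (0,a*n+b) * cpx Psi $$ (a*n+b,l))
            = (if a = 0 then (\<Sum>b<n. \<eta> $$ (0,a*n+b) * complex_of_real (Bm $$ (b,l))) else 0)" by simp
      qed
      also have "\<dots> = (\<Sum>b<n. \<eta> $$ (0,b) * complex_of_real (Bm $$ (b,l)))" using Npos by (simp add: sum.delta)
      also have "\<dots> = (\<Sum>b<n. \<Sum>k<N. v k $$ (0,0) * \<xi> k $$ (0,b) * complex_of_real (Bm $$ (b,l)))"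
        using Npos D1[of 0] by (intro sum.cong refl) (simp add: sum_distrib_right)
      also have "\<dots> = (\<Sum>k<N. \<Sum>b<n. v k $$ (0,0) * \<xi> k $$ (0,b) * complex_of_real (Bm $$ (b,l)))"
        by (rule sum.swap)
      also have "\<dots> = (\<Sum>k<N. v k $$ (0,0) * (\<xi> k * Bc) $$ (0,l))"
        using l by (simp add: Bce sum_distrib_left mult.assoc)
      finally show ?thesis using z l lN by simp
    qed
    have vnz: "\<exists>j<N. v k $$ (0,j) \<noteq> 0" if k: "k < N" for k
    proof (rule ccontr)
      assume na: "\<not> ?thesis"
      define c0 where "c0 = (\<lambda>k'. if k' = k then 1 else (0::complex))"
      have "\<forall>j<N. (\<Sum>k'<N. c0 k' * v k' $$ (0,j)) = 0" using k na by (simp add: sum.delta c0_def)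
      hence "c0 k = 0" using spec[OF v_indep, of c0] k by blast
      thus False by (simp add: c0_def)
    qed
    have v00: "v k $$ (0,0) \<noteq> 0" if k: "k < N" for k
      using circ_first_nonzero[OF N W W1N Wsub Wzero _ _ vnz[OF k]] v_dim v_eig k by blast
    define Ks where "Ks = {k. k < N \<and> \<xi> k \<noteq> 0\<^sub>m 1 n}"
    have Ksf: "finite Ks" and KsN: "Ks \<subseteq> {..<N}" unfolding Ks_def by auto
    have xi0: "\<xi> k = 0\<^sub>m 1 n" if "k < N" "k \<notin> Ks" for k using that unfolding Ks_def by auto
    show "\<eta> = 0\<^sub>m 1 (N*n)"
    proof (cases "card Ks \<le> 1")
      case True
      hence "Ks = {} \<or> (\<exists>k1. Ks = {k1})" using Ksf by (metis card_0_eq card_1_singletonE le_Suc_eq le_zero_eq One_nat_def)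
      thus ?thesis
      proof
        assume Ke: "Ks = {}"
        show ?thesis
        proof (rule eq_matI)
          fix i j assume "i < dim_row (0\<^sub>m 1 (N*n) :: complex mat)" "j < dim_col (0\<^sub>m 1 (N*n) :: complex mat)"
          hence i0: "i = 0" and j: "j < N*n" by auto
          have n0: "n > 0" using pos by simp
          have jd: "j div n < N" "j mod n < n" using j n0 less_mult_imp_div_less by auto
          have "\<eta> $$ (0,j) = \<eta> $$ (0, (j div n)*n + j mod n)" by simp
          also have "\<dots> = (\<Sum>k<N. v k $$ (0,j div n) * \<xi> k $$ (0,j mod n))" using D1 jd by blast
          also have "\<dots> = 0" using xi0 Ke jd by simp
          finally show "\<eta> $$ (i,j) = 0\<^sub>m 1 (N*n) $$ (i,j)" using i0 j by simp
        qed (use \<eta>c in auto)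
      next
        assume "\<exists>k1. Ks = {k1}"
        then obtain k1 where Ke: "Ks = {k1}" by blast
        have k1: "k1 < N" "\<xi> k1 \<noteq> 0\<^sub>m 1 n" using Ke unfolding Ks_def by auto
        have "\<xi> k1 * Bc = 0\<^sub>m 1 p"
        proof (rule eq_matI)
          fix i l assume "i < dim_row (0\<^sub>m 1 p :: complex mat)" "l < dim_col (0\<^sub>m 1 p :: complex mat)"
          hence i0: "i = 0" and l: "l < p" by auto
          have "(\<Sum>k<N. v k $$ (0,0) * (\<xi> k * Bc) $$ (0,l)) = (\<Sum>k<N. if k = k1 then v k1 $$ (0,0) * (\<xi> k1 * Bc) $$ (0,l) else 0)"
          proof (rule sum.cong[OF refl])
            fix k assume k: "k \<in> {..<N}"
            show "v k $$ (0,0) * (\<xi> k * Bc) $$ (0,l) = (if k = k1 then v k1 $$ (0,0) * (\<xi> k1 * Bc) $$ (0,l) else 0)"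
            proof (cases "k = k1")
              case False
              hence "\<xi> k = 0\<^sub>m 1 n" using xi0 k Ke by auto
              thus ?thesis using False l Bcc by simp
            qed simp
          qed
          also have "\<dots> = v k1 $$ (0,0) * (\<xi> k1 * Bc) $$ (0,l)" using k1 by (simp add: sum.delta)
          finally have "v k1 $$ (0,0) * (\<xi> k1 * Bc) $$ (0,l) = 0" using PsiE[OF l] by simp
          thus "(\<xi> k1 * Bc) $$ (i,l) = 0\<^sub>m 1 p $$ (i,l)" using v00[OF k1(1)] i0 l by simp
        qed (use \<xi>c Bcc in auto)
        moreover have "controllable_pair (Ec k1) Bc" using ctrl k1 unfolding Ec_def Bc_def by blast
        ultimately have "\<xi> k1 = 0\<^sub>m 1 n" using ctrl_pair_left[OF Ecc Bcc _ \<xi>c \<xi>eig[OF k1(1)]] by blast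
        thus ?thesis using k1 by simp
      qed
    next
      case False
      hence cK: "1 < card Ks" by simp
      have evs: "\<forall>k\<in>Ks. eigenvalue (cpx (mexp A h) + lam k \<cdot>\<^sub>m cpx (mexp_int A h * H * C)) \<theta>"
      proof
        fix k assume k: "k \<in> Ks"
        hence "k < N" "\<xi> k \<noteq> 0\<^sub>m 1 n" unfolding Ks_def by auto
        hence "eigenvalue (Ec k) \<theta>" using left_eig_eigenvalue[OF Ecc \<xi>c _ \<xi>eig] by blast
        thus "eigenvalue (cpx (mexp A h) + lam k \<cdot>\<^sub>m cpx (mexp_int A h * H * C)) \<theta>" unfolding Ec_def .
      qed
      have les: "\<forall>k\<in>Ks. \<xi> k \<in> left_eigenspace \<theta> (cpx (mexp A h) + lam k \<cdot>\<^sub>m cpx (mexp_int A h * H * C))"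
      proof
        fix k assume k: "k \<in> Ks"
        hence "k < N" unfolding Ks_def by auto
        hence "\<xi> k \<in> left_eigenspace \<theta> (Ec k)" unfolding left_eigenspace_def using \<xi>c[of k] \<xi>eig[of k] Ecc[of k] by (simp add: carrier_matD)
        thus "\<xi> k \<in> left_eigenspace \<theta> (cpx (mexp A h) + lam k \<cdot>\<^sub>m cpx (mexp_int A h * H * C))" unfolding Ec_def .
      qed
      have exK: "\<exists>k\<in>Ks. \<xi> k \<noteq> 0\<^sub>m 1 n"
      proof -
        from cK have "Ks \<noteq> {}" by auto
        then obtain k where "k \<in> Ks" by blast
        thus ?thesis unfolding Ks_def by blast
      qed
      have neq: "mat 1 (N * n) (\<lambda>(i,j). \<Sum>k\<in>Ks. kron (v k) (\<xi> k) $$ (0, j))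
                        * cpx (kron Dl (mexp_int A h * B)) \<noteq> 0\<^sub>m 1 (N * p)"
        using spec[OF spec[OF spec[OF common, of Ks], of \<theta>], of \<xi>] KsN cK evs les exK by blast
      have meq: "mat 1 (N * n) (\<lambda>(i,j). \<Sum>k\<in>Ks. kron (v k) (\<xi> k) $$ (0, j)) = \<eta>"
      proof (rule eq_matI)
        fix i j assume ij: "i < dim_row \<eta>" "j < dim_col \<eta>"
        hence i0: "i = 0" and j: "j < N*n" using \<eta>c by auto
        have n0: "n > 0" using pos by simp
        have jd: "j div n < N" "j mod n < n" using j n0 less_mult_imp_div_less by auto
        have ke: "kron (v k) (\<xi> k) $$ (0, j) = v k $$ (0, j div n) * \<xi> k $$ (0, j mod n)" if k: "k < N" for k
          using kron_entry[of "v k" 1 N "\<xi> k" 1 n 0 j] v_dim k \<xi>c j by simp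
        have "(\<Sum>k\<in>Ks. kron (v k) (\<xi> k) $$ (0, j)) = (\<Sum>k\<in>Ks. v k $$ (0, j div n) * \<xi> k $$ (0, j mod n))"
          using KsN ke by (intro sum.cong refl) auto
        also have "\<dots> = (\<Sum>k<N. v k $$ (0, j div n) * \<xi> k $$ (0, j mod n))"
          using KsN xi0 jd by (intro sum.mono_neutral_left) auto
        also have "\<dots> = \<eta> $$ (0, (j div n)*n + j mod n)" using D1[OF jd(1) jd(2)] by simp
        also have "\<dots> = \<eta> $$ (0,j)" by simp
        finally show "mat 1 (N * n) (\<lambda>(i,j). \<Sum>k\<in>Ks. kron (v k) (\<xi> k) $$ (0, j)) $$ (i,j) = \<eta> $$ (i,j)"
          using i0 j by simp
      qed (use \<eta>c in auto)
      have "\<eta> * cpx (kron Dl (mexp_int A h * B)) = 0\<^sub>m 1 (N * p)"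
        using z unfolding Psi_def Bm_def Ii_def .
      thus ?thesis using neq meq by simp
    qed
  qed
  thus ?thesis unfolding Phi_def Psi_def E0_def Hm_def Bm_def Ii_def .
qed

end
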